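(* Let $\rho_1,\rho_2\colon\mathrm{Isom}(\mathbf H^1_{\mathbb C})_o\to\mathrm{Isom}(\mathbf H^\infty_{\mathbb C})_o$ be irreducible representations with $\ell(\rho_1)=\ell(\rho_2)$, having the same distinguished boundary points $\eta_1,\eta_2$ (i.e. $\eta_1$ is fixed by all $\rho_i(g(\lambda,b))$ and $\eta_2$ by all $\rho_i(g(\lambda,0))$, $i=1,2$), and let $K_1,K_2$ be their functions $K$ computed with the same isotropic representatives $\eta_1,\eta_2$, $B(\eta_1,\eta_2)=1$. Then $K_1(b)+K_2(b)\neq0$ for every $b\neq0$.
   Context: $\mathcal H$: separable complex Hilbert space with strongly non-degenerate Hermitian form $B$ (linear in first variable) of signature $(1,\infty)$; $\mathbf H^\infty_{\mathbb C}=\{[v]:B(v,v)>0\}$, $\cosh d([v],[w])=|B(v,w)|/\sqrt{B(v,v)B(w,w)}$, boundary = isotropic lines, $\mathrm{Isom}(\mathbf H^\infty_{\mathbb C})_o=PU(B)$. $\mathbf H^1_{\mathbb C}$: $\mathbb C^2$ with $B(z,w)=z_1\bar w_1-z_2\bar w_2$, $\xi_{1,2}=(e_1\pm e_2)/\sqrt2$; $g(\lambda,b)\in SU(1,1)$ has matrix $\begin{pmatrix}\lambda&ib\\0&\lambda^{-1}\end{pmatrix}$ in basis $(\xi_1,\xi_2)$. Representations are orbitally continuous; irreducible = no fixed point in $\mathbf H^\infty_{\mathbb C}\cup\partial\mathbf H^\infty_{\mathbb C}$, no invariant pair of boundary points, no proper invariant complex hyperbolic subspace. For such $\rho$, $\eta_1$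 is the unique common fixed boundary point of the $\rho(g(\lambda,b))$ and $\eta_2$ the other endpoint of the common axis of the $\rho(g(\lambda,0))$. With $E=\eta_1^\perp\cap\eta_2^\perp$, the lift $T_b\in U(B)$ of $\rho(g(1,b))$ with $T_b\eta_1=\eta_1$ satisfies $T_b\eta_2=K(b)\eta_1+\eta_2+c(b)$, $K(b)\in\mathbb C$, $c(b)\in E$. $\ell(\rho)$ is the $t>0$ with $\inf_xd(\rho(g(\lambda,0))x,x)=t|\ln\lambda|$. *)

theory Defs
  imports "HOL-Analysis.Analysis"
begin

text \<open>A complex Hilbert space is modelled as a real Hilbert space (type class
  real_inner + complete_space) together with an orthogonal complex structure J
  (multiplication by the imaginary unit).\<close>

definition csc :: "('v::real_vector \<Rightarrow> 'v) \<Rightarrow> complex \<Rightarrow> 'v \<Rightarrow> 'v" where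
  "csc J z v = Re z *\<^sub>R v + Im z *\<^sub>R J v"

definition cspan1 :: "('v::real_vector \<Rightarrow> 'v) \<Rightarrow> 'v \<Rightarrow> 'v set" where
  "cspan1 J v = {csc J z v | z. True}"

definition complex_structure :: "('v::real_inner \<Rightarrow> 'v) \<Rightarrow> bool" where
  "complex_structure J \<longleftrightarrow> linear J \<and> (\<forall>v. J (J v) = - v) \<and> (\<forall>v w. J v \<bullet> J w = v \<bullet> w)"

definition sesquilinear_hermitian ::
  "('v::real_inner \<Rightarrow> 'v) \<Rightarrow> ('v \<Rightarrow> 'v \<Rightarrow> complex) \<Rightarrow> bool" where
  "sesquilinear_hermitian J B \<longleftrightarrow>
     (\<forall>u v w. B (u + v) w = B u w + B v w) \<and>
     (\<forall>z v w. B (csc J z v) w = z * B v w) \<and>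
     (\<forall>v w. B w v = cnj (B v w))"

definition strongly_nondegenerate ::
  "('v::{real_inner,complete_space} \<Rightarrow> 'v) \<Rightarrow> ('v \<Rightarrow> 'v \<Rightarrow> complex) \<Rightarrow> bool" where
  "strongly_nondegenerate J B \<longleftrightarrow>
     (\<exists>C. \<forall>v w. cmod (B v w) \<le> C * norm v * norm w) \<and>
     (\<forall>w. (\<forall>v. B v w = 0) \<longrightarrow> w = 0) \<and>
     (\<forall>f :: 'v \<Rightarrow> complex. bounded_linear f \<and> (\<forall>v. f (J v) = \<i> * f v) \<longrightarrow>
         (\<exists>w. \<forall>v. f v = B v w))"

definition signature_1_inf ::
  "('v::real_vector \<Rightarrow> 'v) \<Rightarrow> ('v \<Rightarrow> 'v \<Rightarrow> complex) \<Rightarrow> bool" where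
  "signature_1_inf J B \<longleftrightarrow>
     (\<exists>v. Re (B v v) > 0) \<and>
     \<not> (\<exists>v w. \<forall>a b. (a, b) \<noteq> (0, 0) \<longrightarrow>
            Re (B (csc J a v + csc J b w) (csc J a v + csc J b w)) > 0) \<and>
     (\<forall>n::nat. \<exists>u :: nat \<Rightarrow> 'v. \<forall>i<n. \<forall>j<n. B (u i) (u j) = (if i = j then -1 else 0))"

definition hyp_setting ::
  "('v::{real_inner,complete_space} \<Rightarrow> 'v) \<Rightarrow> ('v \<Rightarrow> 'v \<Rightarrow> complex) \<Rightarrow> bool" where
  "hyp_setting J B \<longleftrightarrow>
     complex_structure J \<and>
     (\<exists>D :: 'v set. countable D \<and> closure D = UNIV) \<and>
     sesquilinear_hermitian J B \<and> strongly_nondegenerate J B \<and> signature_1_inf J B"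

text \<open>Points of the complex hyperbolic space are represented by vectors v with
  B(v,v) > 0 (the point is the line [v]); boundary points by nonzero isotropic vectors.\<close>
definition hdist :: "('v \<Rightarrow> 'v \<Rightarrow> complex) \<Rightarrow> 'v \<Rightarrow> 'v \<Rightarrow> real" where
  "hdist B v w = arcosh (cmod (B v w) / sqrt (Re (B v v) * Re (B w w)))"

definition unitary_B ::
  "('v::real_normed_vector \<Rightarrow> 'v) \<Rightarrow> ('v \<Rightarrow> 'v \<Rightarrow> complex) \<Rightarrow> ('v \<Rightarrow> 'v) \<Rightarrow> bool" where
  "unitary_B J B T \<longleftrightarrow> bounded_linear T \<and> (\<forall>v. T (J v) = J (T v)) \<and> bij T \<and>
     (\<forall>v w. B (T v) (T w) = B v w)"

definition B11 :: "complex^2 \<Rightarrow> complex^2 \<Rightarrow> complex" where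
  "B11 z w = z $ 1 * cnj (w $ 1) - z $ 2 * cnj (w $ 2)"

definition SU11 :: "(complex^2^2) set" where
  "SU11 = {A. det A = 1 \<and> (\<forall>z w. B11 (A *v z) (A *v w) = B11 z w)}"

definition xi1 :: "complex^2" where
  "xi1 = (\<chi> i. if i = 1 then complex_of_real (1 / sqrt 2) else complex_of_real (1 / sqrt 2))"

definition xi2 :: "complex^2" where
  "xi2 = (\<chi> i. if i = 1 then complex_of_real (1 / sqrt 2) else - complex_of_real (1 / sqrt 2))"

text \<open>g(lambda,b): the matrix (lambda, ib; 0, 1/lambda) in the basis (xi1, xi2).\<close>
definition gmat :: "real \<Rightarrow> real \<Rightarrow> complex^2^2" where
  "gmat l b = (THE A. A *v xi1 = complex_of_real l *s xi1 \<and>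
                      A *v xi2 = (\<i> * complex_of_real b) *s xi1 + complex_of_real (1 / l) *s xi2)"

text \<open>A representation of Isom(H^1_C)_o = PU(1,1) = SU(1,1)/{+-1} into PU(B) is given by
  choosing, for each g in SU(1,1), a lift rho g in U(B) of its image; the lifts are
  multiplicative up to unit scalars and -1 acts by a scalar.  It is required to be
  orbitally continuous.\<close>
definition representation ::
  "('v::{real_inner,complete_space} \<Rightarrow> 'v) \<Rightarrow> ('v \<Rightarrow> 'v \<Rightarrow> complex) \<Rightarrow>
   (complex^2^2 \<Rightarrow> 'v \<Rightarrow> 'v) \<Rightarrow> bool" where
  "representation J B \<rho> \<longleftrightarrow>
     (\<forall>g\<in>SU11. unitary_B J B (\<rho> g)) \<and>
     (\<forall>g\<in>SU11. \<forall>h\<in>SU11. \<exists>\<mu>. cmod \<mu> = 1 \<and> (\<forall>v. \<rho> (g ** h) v = csc J \<mu> (\<rho> g (\<rho> h v)))) \<and>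
     (\<exists>\<mu>. cmod \<mu> = 1 \<and> (\<forall>v. \<rho> (- mat 1) v = csc J \<mu> v)) \<and>
     (\<forall>v g0. Re (B v v) > 0 \<and> g0 \<in> SU11 \<longrightarrow>
        ((\<lambda>g. hdist B (\<rho> g v) (\<rho> g0 v)) \<longlongrightarrow> 0) (at g0 within SU11))"

definition complex_subspace :: "('v::real_vector \<Rightarrow> 'v) \<Rightarrow> 'v set \<Rightarrow> bool" where
  "complex_subspace J W \<longleftrightarrow> subspace W \<and> J ` W \<subseteq> W"

definition irreducible ::
  "('v::{real_inner,complete_space} \<Rightarrow> 'v) \<Rightarrow> ('v \<Rightarrow> 'v \<Rightarrow> complex) \<Rightarrow>
   (complex^2^2 \<Rightarrow> 'v \<Rightarrow> 'v) \<Rightarrow> bool" where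
  "irreducible J B \<rho> \<longleftrightarrow>
     \<comment> \<open>no fixed point in H^infty or in its boundary\<close>
     \<not> (\<exists>v. v \<noteq> 0 \<and> Re (B v v) \<ge> 0 \<and> (\<forall>g\<in>SU11. \<rho> g v \<in> cspan1 J v)) \<and>
     \<comment> \<open>no invariant pair of (distinct) boundary points\<close>
     \<not> (\<exists>v w. v \<noteq> 0 \<and> w \<noteq> 0 \<and> B v v = 0 \<and> B w w = 0 \<and> w \<notin> cspan1 J v \<and>
          (\<forall>g\<in>SU11. (\<rho> g v \<in> cspan1 J v \<and> \<rho> g w \<in> cspan1 J w) \<or>
                     (\<rho> g v \<in> cspan1 J w \<and> \<rho> g w \<in> cspan1 J v))) \<and>
     \<comment> \<open>no proper invariant complex hyperbolic subspace\<close>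
     \<not> (\<exists>W. complex_subspace J W \<and> closed W \<and> W \<noteq> UNIV \<and> (\<exists>v\<in>W. Re (B v v) > 0) \<and>
          (\<forall>g\<in>SU11. \<rho> g ` W \<subseteq> W))"

definition ell ::
  "('v \<Rightarrow> 'v \<Rightarrow> complex) \<Rightarrow> (complex^2^2 \<Rightarrow> 'v \<Rightarrow> 'v) \<Rightarrow> real" where
  "ell B \<rho> = (THE t. t > 0 \<and>
     (\<forall>l>0. (INF v\<in>{v. Re (B v v) > 0}. hdist B (\<rho> (gmat l 0) v) v) = t * \<bar>ln l\<bar>))"

definition Kfun ::
  "('v::real_vector \<Rightarrow> 'v) \<Rightarrow> ('v \<Rightarrow> 'v \<Rightarrow> complex) \<Rightarrow> (complex^2^2 \<Rightarrow> 'v \<Rightarrow> 'v) \<Rightarrow>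
   'v \<Rightarrow> 'v \<Rightarrow> real \<Rightarrow> complex" where
  "Kfun J B \<rho> \<eta>1 \<eta>2 b = (THE k. \<exists>\<mu> c. cmod \<mu> = 1 \<and>
      csc J \<mu> (\<rho> (gmat 1 b) \<eta>1) = \<eta>1 \<and>
      B c \<eta>1 = 0 \<and> B c \<eta>2 = 0 \<and>
      csc J \<mu> (\<rho> (gmat 1 b) \<eta>2) = csc J k \<eta>1 + \<eta>2 + c)"

end

theory Submission
  imports Defs
begin

lemma csc_add_scal: "csc J (z + z') v = csc J z v + csc J z' v"
  by (simp add: csc_def scaleR_left_distrib)
lemma csc_one[simp]: "csc J 1 v = v" by (simp add: csc_def)
lemma csc_zero[simp]: "csc J 0 v = 0" by (simp add: csc_def)
lemma csc_of_real[simp]: "csc J (complex_of_real r) v = r *\<^sub>R v" by (simp add: csc_def)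
lemma csc_ii: "csc J \<i> v = J v" by (simp add: csc_def)

locale hs =
  fixes J :: "'v::{real_inner,complete_space} \<Rightarrow> 'v" and B :: "'v \<Rightarrow> 'v \<Rightarrow> complex"
  assumes hyp: "hyp_setting J B"
begin

lemma cs: "complex_structure J" using hyp by (simp add: hyp_setting_def)
lemma linJ: "linear J" using cs by (simp add: complex_structure_def)
lemma JJ[simp]: "J (J v) = - v" using cs by (simp add: complex_structure_def)
lemma J_add: "J (v + w) = J v + J w" using linJ by (simp add: linear_add)
lemma J_scale: "J (r *\<^sub>R v) = r *\<^sub>R J v" using linJ by (simp add: linear_scale)
lemma J0[simp]: "J 0 = 0" using linJ by (simp add: linear_0)

lemma csc_add_vec: "csc J z (v + w) = csc J z v + csc J z w"
  by (simp add: csc_def J_add scaleR_right_distrib)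
lemma csc_zero_vec[simp]: "csc J z 0 = 0" by (simp add: csc_def)
lemma csc_mult: "csc J z (csc J z' v) = csc J (z*z') v"
  using linJ apply (simp add: csc_def linear_add linear_scale)
  apply (simp add: algebra_simps)
  done
lemma csc_neg1: "csc J (-1) v = - v" by (simp add: csc_def)
lemma csc_minus_vec: "csc J z (v - w) = csc J z v - csc J z w"
  by (simp add: csc_def linear_diff[OF linJ] scaleR_diff_right)
lemma csc_diff_scal: "csc J (z - z') v = csc J z v - csc J z' v"
  by (simp add: csc_def scaleR_left_distrib scaleR_diff_left)
lemma csc_cancel: "v \<noteq> 0 \<Longrightarrow> csc J a v = csc J a' v \<Longrightarrow> a = a'"
proof (rule ccontr)
  assume "v \<noteq> 0" "csc J a v = csc J a' v" "a \<noteq> a'"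
  hence "csc J (a - a') v = 0" by (simp add: csc_diff_scal)
  hence "csc J (inverse (a - a')) (csc J (a - a') v) = 0" by simp
  hence "v = 0" using \<open>a \<noteq> a'\<close> by (simp add: csc_mult)
  thus False using \<open>v \<noteq> 0\<close> by simp
qed
lemma csc_eq0: "csc J a v = 0 \<Longrightarrow> v \<noteq> 0 \<Longrightarrow> a = 0"
  using csc_cancel[of v a 0] by simp

lemma sh: "sesquilinear_hermitian J B" using hyp by (simp add: hyp_setting_def)
lemma B_add_left: "B (u + v) w = B u w + B v w" using sh unfolding sesquilinear_hermitian_def by blast
lemma B_csc_left: "B (csc J z v) w = z * B v w" using sh unfolding sesquilinear_hermitian_def by blast
lemma B_herm: "B w v = cnj (B v w)" using sh unfolding sesquilinear_hermitian_def by blast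
lemma B_add_right: "B w (u + v) = B w u + B w v"
proof -
  have "B w (u + v) = cnj (B (u + v) w)" by (rule B_herm)
  also have "\<dots> = cnj (B u w) + cnj (B v w)" by (simp add: B_add_left)
  also have "\<dots> = B w u + B w v" using B_herm[of w u] B_herm[of w v] by simp
  finally show ?thesis .
qed
lemma B_csc_right: "B v (csc J z w) = cnj z * B v w"
proof -
  have "B v (csc J z w) = cnj (B (csc J z w) v)" by (rule B_herm)
  also have "\<dots> = cnj z * cnj (B w v)" by (simp add: B_csc_left)
  also have "\<dots> = cnj z * B v w" using B_herm[of v w] by simp
  finally show ?thesis .
qed
lemma B_zero_left[simp]: "B 0 w = 0" using B_csc_left[of 0 0 w] by simp
lemma B_zero_right[simp]: "B w 0 = 0" using B_csc_right[of w 0 0] by simp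
lemma B_neg_left: "B (- v) w = - B v w" using B_csc_left[of "-1" v w] by (simp add: csc_neg1)
lemma B_neg_right: "B w (- v) = - B w v" using B_csc_right[of w "-1" v] by (simp add: csc_neg1)
lemma B_diff_left: "B (u - v) w = B u w - B v w"
  using B_add_left[of u "-v" w] B_neg_left by simp
lemma B_diff_right: "B w (u - v) = B w u - B w v"
  using B_add_right[of w u "-v"] B_neg_right by simp
lemma B_self_real: "B v v = complex_of_real (Re (B v v))"
proof -
  have "Im (B v v) = 0" using B_herm[of v v] by (metis cnj.sel(2) minus_equation_iff equal_neg_zero)
  thus ?thesis by (simp add: complex_eq_iff)
qed
lemma B_scaleR_left: "B (r *\<^sub>R v) w = r * B v w"
  using B_csc_left[of "complex_of_real r" v w] by simp

lemmas Bsimps = B_add_left B_add_right B_csc_left B_csc_right B_diff_left B_diff_right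
  B_neg_left B_neg_right

end

definition hh :: complex where "hh = complex_of_real (1 / sqrt 2)"
lemma hh_sq: "hh * hh = 1/2"
proof -
  have "(1 / sqrt 2) * (1 / sqrt 2) = (1/2::real)" by (simp add: divide_simps)
  hence "complex_of_real ((1 / sqrt 2) * (1 / sqrt 2)) = 1/2" by simp
  thus ?thesis unfolding hh_def by (simp only: of_real_mult)
qed
lemma hh_sq2: "hh * (hh * x) = x / 2" by (simp add: hh_sq flip: mult.assoc)
lemma hh_nz: "hh \<noteq> 0" by (simp add: hh_def)
lemma cnj_hh[simp]: "cnj hh = hh" by (simp add: hh_def)

definition c1 :: "complex^2 \<Rightarrow> complex" where "c1 x = (x$1 + x$2) * hh"
definition c2 :: "complex^2 \<Rightarrow> complex" where "c2 x = (x$1 - x$2) * hh"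

definition mk :: "complex \<Rightarrow> complex \<Rightarrow> complex \<Rightarrow> complex \<Rightarrow> complex^2^2" where
 "mk p q r s = (\<chi> i j. (if i = 1 then (if j = 1 then p+q+r+s else p-q+r-s)
                        else (if j = 1 then p+q-r-s else p-q-r+s)) / 2)"

lemma xi1_nth[simp]: "xi1 $ i = hh" by (simp add: xi1_def hh_def)
lemma xi2_1[simp]: "xi2 $ 1 = hh" and xi2_2[simp]: "xi2 $ 2 = - hh" by (simp_all add: xi2_def hh_def)

lemma mk_11[simp]: "mk p q r s $ 1 $ 1 = (p+q+r+s)/2"
  and mk_12[simp]: "mk p q r s $ 1 $ 2 = (p-q+r-s)/2"
  and mk_21[simp]: "mk p q r s $ 2 $ 1 = (p+q-r-s)/2"
  and mk_22[simp]: "mk p q r s $ 2 $ 2 = (p-q-r+s)/2"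
  by (simp_all add: mk_def)

lemma mv_1: "((A::complex^2^2) *v x) $ 1 = A$1$1 * x$1 + A$1$2 * x$2"
  and mv_2: "((A::complex^2^2) *v x) $ 2 = A$2$1 * x$1 + A$2$2 * x$2"
  by (simp_all add: matrix_vector_mult_def sum_2)

lemma vec2_eq: "(x::complex^2) = y \<longleftrightarrow> x$1 = y$1 \<and> x$2 = y$2"
  by (simp add: vec_eq_iff forall_2)
lemma mat2_eq: "(A::complex^2^2) = C \<longleftrightarrow> A$1$1 = C$1$1 \<and> A$1$2 = C$1$2 \<and> A$2$1 = C$2$1 \<and> A$2$2 = C$2$2"
  by (auto simp add: vec_eq_iff forall_2)

lemma c1_xi[simp]: "c1 xi1 = 1" "c1 xi2 = 0" "c2 xi1 = 0" "c2 xi2 = 1"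
  using hh_sq by (simp_all add: c1_def c2_def) (simp_all add: field_simps hh_sq hh_sq2)

lemma mk_xi1: "mk p q r s *v xi1 = p *s xi1 + r *s xi2"
  by (simp add: vec2_eq mv_1 mv_2) (simp_all add: field_simps hh_sq hh_sq2)
lemma mk_xi2: "mk p q r s *v xi2 = q *s xi1 + s *s xi2"
  by (simp add: vec2_eq mv_1 mv_2) (simp_all add: field_simps hh_sq hh_sq2)

lemma c1_mk: "c1 (mk p q r s *v x) = p * c1 x + q * c2 x"
  by (simp add: c1_def c2_def mv_1 mv_2) (simp_all add: field_simps hh_sq hh_sq2)
lemma c2_mk: "c2 (mk p q r s *v x) = r * c1 x + s * c2 x"
  by (simp add: c1_def c2_def mv_1 mv_2) (simp_all add: field_simps hh_sq hh_sq2)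

lemma B11_c: "B11 x y = c1 x * cnj (c2 y) + c2 x * cnj (c1 y)"
  using hh_sq unfolding B11_def c1_def c2_def by (simp add: field_simps hh_sq hh_sq2)

lemma mk_all: "(A::complex^2^2) = mk (c1 (A *v xi1)) (c1 (A *v xi2)) (c2 (A *v xi1)) (c2 (A *v xi2))"
  using hh_sq by (simp add: mat2_eq c1_def c2_def mv_1 mv_2) (simp_all add: field_simps hh_sq hh_sq2)

lemma mk_mult: "mk p q r s ** mk p2 q2 r2 s2 = mk (p * p2 + q * r2) (p * q2 + q * s2) (r * p2 + s * r2) (r * q2 + s * s2)"
  by (simp add: mat2_eq matrix_matrix_mult_def sum_2) (simp_all add: field_simps hh_sq hh_sq2)

lemma mk_det: "det (mk p q r s) = p * s - q * r"
  by (simp add: det_2) (simp_all add: field_simps hh_sq hh_sq2)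

lemma mk_eq: "mk p q r s = mk p2 q2 r2 s2 \<longleftrightarrow> p = p2 \<and> q = q2 \<and> r = r2 \<and> s = s2"
proof
  assume "mk p q r s = mk p2 q2 r2 s2"
  hence "c1 (mk p q r s *v xi1) = c1 (mk p2 q2 r2 s2 *v xi1)" "c1 (mk p q r s *v xi2) = c1 (mk p2 q2 r2 s2 *v xi2)"
    "c2 (mk p q r s *v xi1) = c2 (mk p2 q2 r2 s2 *v xi1)" "c2 (mk p q r s *v xi2) = c2 (mk p2 q2 r2 s2 *v xi2)"
    by simp_all
  thus "p = p2 \<and> q = q2 \<and> r = r2 \<and> s = s2" by (simp add: c1_mk c2_mk)
qed simp

lemma mat1_mk: "mat 1 = mk 1 0 0 1"
  by (simp add: mat2_eq mat_def)
lemma negmat1_mk: "- mat 1 = mk (-1) 0 0 (-1)"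
  by (simp add: mat2_eq mat_def)


lemma c1_lin: "c1 (a *s x + b *s y) = a * c1 x + b * c1 y"
  by (simp add: c1_def algebra_simps)
lemma c2_lin: "c2 (a *s x + b *s y) = a * c2 x + b * c2 y"
  by (simp add: c2_def algebra_simps)
lemma c1_sm: "c1 (a *s x) = a * c1 x" by (simp add: c1_def algebra_simps)
lemma c2_sm: "c2 (a *s x) = a * c2 x" by (simp add: c2_def algebra_simps)

lemma SU11_mult: "g \<in> SU11 \<Longrightarrow> h \<in> SU11 \<Longrightarrow> g ** h \<in> SU11"
  by (simp add: SU11_def det_mul flip: matrix_vector_mul_assoc)

lemma mk_SU11_iff: "mk p q r s \<in> SU11 \<longleftrightarrow>
   p * s - q * r = 1 \<and> p * cnj r + r * cnj p = 0 \<and> q * cnj s + s * cnj q = 0 \<and> p * cnj s + r * cnj q = 1"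
proof
  assume "mk p q r s \<in> SU11"
  hence d: "det (mk p q r s) = 1" and f: "\<And>z w. B11 (mk p q r s *v z) (mk p q r s *v w) = B11 z w"
    by (auto simp: SU11_def)
  have 1: "p * cnj r + r * cnj p = 0" using f[of xi1 xi1] by (simp add: B11_c c1_mk c2_mk)
  have 2: "q * cnj s + s * cnj q = 0" using f[of xi2 xi2] by (simp add: B11_c c1_mk c2_mk)
  have 3: "p * cnj s + r * cnj q = 1" using f[of xi1 xi2] by (simp add: B11_c c1_mk c2_mk)
  show "p * s - q * r = 1 \<and> p * cnj r + r * cnj p = 0 \<and> q * cnj s + s * cnj q = 0 \<and> p * cnj s + r * cnj q = 1"
    using d 1 2 3 by (simp add: mk_det)
next
  assume h: "p * s - q * r = 1 \<and> p * cnj r + r * cnj p = 0 \<and> q * cnj s + s * cnj q = 0 \<and> p * cnj s + r * cnj q = 1"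
  have h4: "q * cnj r + s * cnj p = 1"
  proof -
    have "cnj (p * cnj s + r * cnj q) = 1" using h by simp
    thus ?thesis by (simp add: algebra_simps)
  qed
  have "B11 (mk p q r s *v z) (mk p q r s *v w) = B11 z w" for z w
  proof -
    define \<alpha> \<beta> \<gamma> \<delta> where "\<alpha> = c1 z" "\<beta> = c2 z" "\<gamma> = c1 w" "\<delta> = c2 w"
    have "B11 (mk p q r s *v z) (mk p q r s *v w) =
       (p * \<alpha> + q * \<beta>) * cnj (r * \<gamma> + s * \<delta>) + (r * \<alpha> + s * \<beta>) * cnj (p * \<gamma> + q * \<delta>)"
      by (simp add: B11_c c1_mk c2_mk \<alpha>_\<beta>_\<gamma>_\<delta>_def)
    also have "\<dots> = \<alpha> * cnj \<gamma> * (p * cnj r + r * cnj p) + \<alpha> * cnj \<delta> * (p * cnj s + r * cnj q)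
        + \<beta> * cnj \<gamma> * (q * cnj r + s * cnj p) + \<beta> * cnj \<delta> * (q * cnj s + s * cnj q)"
      by (simp add: algebra_simps)
    also have "\<dots> = \<alpha> * cnj \<delta> + \<beta> * cnj \<gamma>" using h h4 by simp
    also have "\<dots> = B11 z w" by (simp add: B11_c \<alpha>_\<beta>_\<gamma>_\<delta>_def)
    finally show ?thesis .
  qed
  thus "mk p q r s \<in> SU11" using h by (simp add: SU11_def mk_det)
qed

lemma gmat_mk: "gmat l b = mk (complex_of_real l) (\<i> * complex_of_real b) 0 (complex_of_real (1 / l))"
  unfolding gmat_def
proof (rule the_equality)
  show "mk (complex_of_real l) (\<i> * complex_of_real b) 0 (complex_of_real (1 / l)) *v xi1 = complex_of_real l *s xi1 \<and>
    mk (complex_of_real l) (\<i> * complex_of_real b) 0 (complex_of_real (1 / l)) *v xi2 =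
    (\<i> * complex_of_real b) *s xi1 + complex_of_real (1 / l) *s xi2"
    by (simp add: mk_xi1 mk_xi2)
next
  fix A :: "complex^2^2"
  assume "A *v xi1 = complex_of_real l *s xi1 \<and> A *v xi2 = (\<i> * complex_of_real b) *s xi1 + complex_of_real (1 / l) *s xi2"
  thus "A = mk (complex_of_real l) (\<i> * complex_of_real b) 0 (complex_of_real (1 / l))"
    by (subst mk_all) (simp add: c1_lin c2_lin c1_sm c2_sm)
qed

definition ww :: "complex^2^2" where "ww = mk 0 \<i> \<i> 0"
definition mm :: "real \<Rightarrow> complex^2^2" where "mm t = mk 1 0 (\<i> * complex_of_real t) 1"

lemma gmat_SU11: "l \<noteq> 0 \<Longrightarrow> gmat l b \<in> SU11"
  by (simp add: gmat_mk mk_SU11_iff)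
lemma ww_SU11: "ww \<in> SU11" by (simp add: ww_def mk_SU11_iff)
lemma mm_SU11: "mm t \<in> SU11" by (simp add: mm_def mk_SU11_iff)
lemma mat1_SU11: "mat 1 \<in> SU11" by (simp add: mat1_mk mk_SU11_iff)
lemma negmat1_SU11: "- mat 1 \<in> SU11" by (simp add: negmat1_mk mk_SU11_iff)

lemma gmat_1_0: "gmat 1 0 = mat 1" by (simp add: gmat_mk mat1_mk)

lemma R_conj_n: "l \<noteq> 0 \<Longrightarrow> (gmat l 0 ** gmat 1 b) ** gmat (1/l) 0 = gmat 1 (l^2 * b)"
  by (simp add: gmat_mk mk_mult mk_eq power2_eq_square)
lemma R_nn: "gmat 1 b ** gmat 1 b2 = gmat 1 (b + b2)"
  by (simp add: gmat_mk mk_mult mk_eq algebra_simps)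
lemma R_aa: "l \<noteq> 0 \<Longrightarrow> gmat l 0 ** gmat (1/l) 0 = mat 1"
  by (simp add: gmat_mk mk_mult mat1_mk)
lemma R_wa: "l \<noteq> 0 \<Longrightarrow> ww ** gmat l 0 = gmat (1/l) 0 ** ww"
  by (simp add: gmat_mk mk_mult ww_def mk_eq)
lemma R_w: "ww = gmat 1 1 ** (mm 1 ** gmat 1 1)"
  by (simp add: gmat_mk mk_mult ww_def mm_def mk_eq)
lemma R_conj_m: "l \<noteq> 0 \<Longrightarrow> (gmat l 0 ** mm t) ** gmat (1/l) 0 = mm (t / l^2)"
  by (simp add: gmat_mk mk_mult mm_def mk_eq power2_eq_square field_simps)


lemma upper_gen:
  assumes "mk p q 0 s \<in> SU11"
  shows "\<exists>l>0. \<exists>b. mk p q 0 s = gmat l b \<or> mk p q 0 s = (- mat 1) ** gmat l b"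
proof -
  from assms have h1: "p * s = 1" and h2: "p * cnj s = 1" and h3: "q * cnj s + s * cnj q = 0"
    by (auto simp: mk_SU11_iff)
  have pnz: "p \<noteq> 0" using h1 by auto
  have "s = cnj s" using h1 h2 pnz by (metis mult_left_cancel)
  hence ims: "Im s = 0" by (metis cnj.sel(2) equal_neg_zero)
  define \<sigma> where "\<sigma> = Re s"
  have s_eq: "s = complex_of_real \<sigma>" using ims by (simp add: complex_eq_iff \<sigma>_def)
  have snz: "\<sigma> \<noteq> 0" using h1 s_eq by auto
  have p_eq: "p = complex_of_real (1/\<sigma>)" using h1 s_eq snz by (simp add: field_simps)
  have "complex_of_real \<sigma> * (q + cnj q) = 0" using h3 s_eq by (simp add: algebra_simps)
  hence "q + cnj q = 0" using snz by simp
  hence "Re q = 0" using complex_add_cnj[of q] by simp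
  hence q_eq: "q = \<i> * complex_of_real (Im q)" by (simp add: complex_eq_iff)
  show ?thesis
  proof (cases "\<sigma> > 0")
    case True
    have "mk p q 0 s = gmat (1/\<sigma>) (Im q)"
      using snz by (simp add: gmat_mk mk_eq p_eq s_eq q_eq[symmetric])
    thus ?thesis using True by (intro exI[of _ "1/\<sigma>"]) auto
  next
    case False
    hence neg: "\<sigma> < 0" using snz by auto
    have "mk p q 0 s = (- mat 1) ** gmat (-1/\<sigma>) (- Im q)"
      using snz by (simp add: gmat_mk mk_eq p_eq s_eq negmat1_mk mk_mult) (subst q_eq, simp)
    thus ?thesis using neg by (intro exI[of _ "-1/\<sigma>"]) (auto simp: field_simps)
  qed
qed

lemma SU11_gen:
  assumes "g \<in> SU11"
  shows "\<exists>l b t. l > 0 \<and> (g = gmat l b \<or> g = (- mat 1) ** gmat l b \<or>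
           g = gmat 1 t ** (ww ** gmat l b) \<or> g = gmat 1 t ** (ww ** ((- mat 1) ** gmat l b)))"
proof -
  define p q r s where "p = c1 (g *v xi1)" "q = c1 (g *v xi2)" "r = c2 (g *v xi1)" "s = c2 (g *v xi2)"
  have g_eq: "g = mk p q r s" unfolding p_q_r_s_def by (rule mk_all)
  have cond: "p * s - q * r = 1" "p * cnj r + r * cnj p = 0" "q * cnj s + s * cnj q = 0" "p * cnj s + r * cnj q = 1"
    using assms g_eq by (auto simp: mk_SU11_iff)
  show ?thesis
  proof (cases "r = 0")
    case True
    then obtain l b where "l > 0" "g = gmat l b \<or> g = (- mat 1) ** gmat l b"
      using upper_gen[of p q s] assms g_eq by auto
    thus ?thesis by blast
  next
    case False
    define t where "t = Re (\<i> * p / r)"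
    have "Re (p * cnj r) = 0" using cond(2)
      by (metis complex_add_cnj complex_cnj_cnj complex_cnj_mult mult.commute of_real_eq_0_iff
          mult_eq_0_iff zero_neq_numeral)
    hence "Re (p / r) = 0" using False
      by (simp add: complex_div_cnj[of p r] del: complex_cnj_mult)
    moreover have "Im (\<i> * p / r) = Re (p / r)" by (metis Im_i_times times_divide_eq_right)
    ultimately have "Im (\<i> * p / r) = 0" by simp
    hence "\<i> * p / r = complex_of_real t" unfolding t_def by (simp add: complex_eq_iff)
    hence "\<i> * p = complex_of_real t * r" using False by (simp add: field_simps)
    hence "- \<i> * (\<i> * p) = - \<i> * (complex_of_real t * r)" by simp
    hence p_eq: "p = - \<i> * complex_of_real t * r" by (simp add: mult.assoc[symmetric])
    define q' where "q' = q + \<i> * complex_of_real t * s"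
    define u where "u = mk (- \<i> * r) (- \<i> * s) 0 (- \<i> * q')"
    have u_SU11: "u \<in> SU11"
    proof -
      have "u = (- mat 1) ** (ww ** (gmat 1 t ** g))"
        by (simp add: u_def g_eq gmat_mk ww_def negmat1_mk mk_mult mk_eq p_eq q'_def algebra_simps)
      thus ?thesis using assms by (simp add: SU11_mult negmat1_SU11 ww_SU11 gmat_SU11)
    qed
    have g_eq2: "g = gmat 1 (- t) ** (ww ** u)"
      by (simp add: u_def g_eq gmat_mk ww_def mk_mult mk_eq p_eq q'_def algebra_simps)
    obtain l b where "l > 0" "u = gmat l b \<or> u = (- mat 1) ** gmat l b"
      using upper_gen[of "- \<i> * r" "- \<i> * s" "- \<i> * q'"] u_SU11 unfolding u_def by auto
    thus ?thesis using g_eq2 by blast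
  qed
qed

lemma mk_tendsto:
  assumes "(P \<longlongrightarrow> p) F" "(Q \<longlongrightarrow> q) F" "(R \<longlongrightarrow> r) F" "(S \<longlongrightarrow> s) F"
  shows "((\<lambda>x. mk (P x) (Q x) (R x) (S x)) \<longlongrightarrow> mk p q r s) F"
proof (rule vec_tendstoI)
  fix i :: 2
  show "((\<lambda>x. mk (P x) (Q x) (R x) (S x) $ i) \<longlongrightarrow> mk p q r s $ i) F"
  proof (rule vec_tendstoI)
    fix j :: 2
    show "((\<lambda>x. mk (P x) (Q x) (R x) (S x) $ i $ j) \<longlongrightarrow> mk p q r s $ i $ j) F"
      using exhaust_2[of i] exhaust_2[of j]
      by (elim disjE; simp; intro tendsto_intros assms; simp)
  qed
qed

lemma seq_to0: "(\<lambda>k. c / (real k + 1)^2) \<longlonglongrightarrow> 0"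
proof -
  have "(\<lambda>k. inverse (real (Suc k))) \<longlonglongrightarrow> 0" by (rule LIMSEQ_inverse_real_of_nat)
  hence "(\<lambda>k. 1 / (real k + 1)) \<longlonglongrightarrow> 0" by (simp add: inverse_eq_divide add.commute)
  hence "(\<lambda>k. c * ((1 / (real k + 1)) * (1 / (real k + 1)))) \<longlonglongrightarrow> c * (0 * 0)"
    by (intro tendsto_intros)
  thus ?thesis by (simp add: power2_eq_square)
qed

lemma gmat_seq: "(\<lambda>k. gmat 1 (b / (real k + 1)^2)) \<longlonglongrightarrow> mat 1"
proof -
  have "(\<lambda>k. mk 1 (\<i> * complex_of_real (b / (real k + 1)^2)) 0 1) \<longlonglongrightarrow> mk 1 (\<i> * complex_of_real 0) 0 1"
    by (intro mk_tendsto tendsto_intros seq_to0)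
  thus ?thesis by (simp add: gmat_mk mat1_mk)
qed

lemma mm_seq: "(\<lambda>k. mm (b / (real k + 1)^2)) \<longlonglongrightarrow> mat 1"
proof -
  have "(\<lambda>k. mk 1 0 (\<i> * complex_of_real (b / (real k + 1)^2)) 1) \<longlonglongrightarrow> mk 1 0 (\<i> * complex_of_real 0) 1"
    by (intro mk_tendsto tendsto_intros seq_to0)
  thus ?thesis by (simp add: mm_def mat1_mk)
qed

lemma gmat_ne1: "b \<noteq> 0 \<Longrightarrow> gmat 1 b \<noteq> mat 1"
  by (simp add: gmat_mk mat1_mk mk_eq)
lemma mm_ne1: "b \<noteq> 0 \<Longrightarrow> mm b \<noteq> mat 1"
  by (simp add: mm_def mat1_mk mk_eq)


context hs begin

lemma sig: "signature_1_inf J B" using hyp by (simp add: hyp_setting_def)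
lemma sndg: "strongly_nondegenerate J B" using hyp by (simp add: hyp_setting_def)
lemma nondeg: "(\<And>v. B v w = 0) \<Longrightarrow> w = 0" using sndg unfolding strongly_nondegenerate_def by blast

lemma cnj_mult_self: "z * cnj z = complex_of_real ((cmod z)^2)"
  using complex_norm_square[of z] by simp
lemma B_csc_csc: "B (csc J z x) (csc J z x) = complex_of_real ((cmod z)^2) * B x x"
proof -
  have "B (csc J z x) (csc J z x) = (z * cnj z) * B x x" by (simp add: B_csc_left B_csc_right mult.assoc)
  thus ?thesis by (simp only: cnj_mult_self)
qed
lemma Re_B_csc_csc: "Re (B (csc J z x) (csc J z x)) = (cmod z)^2 * Re (B x x)"
  by (simp add: B_csc_csc)

lemma B_expand2: "B (csc J a v + csc J b w) (csc J a v + csc J b w) =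
   a * cnj a * B v v + a * cnj b * B v w + b * cnj a * B w v + b * cnj b * B w w"
  by (simp add: Bsimps algebra_simps)

lemma ND1:
  assumes "Re (B p p) > 0" "B e p = 0" "Re (B e e) > 0" shows False
proof -
  have "\<forall>a b. (a, b) \<noteq> (0, 0) \<longrightarrow> Re (B (csc J a p + csc J b e) (csc J a p + csc J b e)) > 0"
  proof (intro allI impI)
    fix a b :: complex assume ab: "(a, b) \<noteq> (0, 0)"
    have Bpe: "B p e = 0" using assms(2) B_herm[of p e] by simp
    have "Re (B (csc J a p + csc J b e) (csc J a p + csc J b e)) = (cmod a)^2 * Re (B p p) + (cmod b)^2 * Re (B e e)"
      by (simp add: B_expand2 assms(2) Bpe cnj_mult_self)
    moreover have "(cmod a)^2 * Re (B p p) + (cmod b)^2 * Re (B e e) > 0"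
    proof (cases "a = 0")
      case True
      hence "b \<noteq> 0" using ab by auto
      thus ?thesis using True assms by (simp add: add_pos_nonneg)
    next
      case False
      thus ?thesis using assms by (intro add_pos_nonneg) auto
    qed
    ultimately show "Re (B (csc J a p + csc J b e) (csc J a p + csc J b e)) > 0" by simp
  qed
  thus False using sig unfolding signature_1_inf_def by blast
qed

lemma ND:
  assumes pp: "Re (B p p) > 0" and ep: "B e p = 0" and ee: "Re (B e e) \<ge> 0" shows "e = 0"
proof (rule ccontr)
  assume enz: "e \<noteq> 0"
  have ee0: "Re (B e e) = 0" using ND1[OF pp ep] ee by fastforce
  hence Bee: "B e e = 0" using B_self_real[of e] by simp
  obtain f where f: "B f e \<noteq> 0" using nondeg enz by blast
  have Bpp_nz: "B p p \<noteq> 0" using pp by auto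
  define f' where "f' = f - csc J (B f p / B p p) p"
  have f'p: "B f' p = 0" using Bpp_nz by (simp add: f'_def Bsimps)
  have Bpe: "B p e = 0" using ep B_herm[of p e] by simp
  define \<beta> where "\<beta> = B f' e"
  have bnz: "\<beta> \<noteq> 0" using f by (simp add: \<beta>_def f'_def Bsimps Bpe)
  have ef': "B e f' = cnj \<beta>" using B_herm[of e f'] by (simp add: \<beta>_def)
  define r where "r = Re (B f' f')"
  have Bff: "B f' f' = complex_of_real r" using B_self_real[of f'] by (simp add: r_def)
  define s :: real where "s = 1 / (1 + \<bar>r\<bar>)"
  have s_pos: "s > 0" by (simp add: s_def)
  have sr: "s * \<bar>r\<bar> < 1" by (simp add: s_def field_simps)
  define z where "z = complex_of_real s * cnj \<beta>"
  define e' where "e' = e + csc J z f'"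
  have e'p: "B e' p = 0" by (simp add: e'_def Bsimps ep f'p)
  define nb where "nb = (cmod \<beta>)^2"
  have bb: "\<beta> * cnj \<beta> = complex_of_real nb" by (simp add: nb_def cnj_mult_self)
  have fe: "B f' e = \<beta>" by (simp add: \<beta>_def)
  have "B e' e' = B e e + cnj z * B e f' + z * B f' e + z * (cnj z * B f' f')"
    by (simp add: e'_def B_add_left B_add_right B_csc_left B_csc_right algebra_simps)
  also have "\<dots> = cnj z * cnj \<beta> + z * \<beta> + z * cnj z * complex_of_real r"
    by (simp only: Bee ef' fe Bff add_0 mult.assoc)
  also have "cnj z * cnj \<beta> = complex_of_real (s * nb)"
    by (simp add: z_def mult.assoc bb)
  also have "z * \<beta> = complex_of_real (s * nb)"
    by (simp add: z_def mult.assoc bb mult.commute[of "cnj \<beta>" \<beta>])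
  also have "z * cnj z = complex_of_real (s * s * nb)"
    by (simp add: z_def bb mult.commute mult.left_commute)
  finally have "B e' e' = complex_of_real (s * nb * (2 + s * r))"
    by (simp add: algebra_simps)
  hence "Re (B e' e') = (cmod \<beta>)^2 * s * (2 + s * r)" by (simp add: nb_def mult.assoc)
  moreover have "(cmod \<beta>)^2 * s * (2 + s * r) > 0"
  proof -
    have "s * (- \<bar>r\<bar>) \<le> s * r" using s_pos by (intro mult_left_mono) auto
    hence "s * r > -1" using sr by simp
    thus ?thesis using bnz s_pos by (intro mult_pos_pos) auto
  qed
  ultimately show False using ND1[OF pp e'p] by simp
qed

lemma hdist_scale_left: "z \<noteq> 0 \<Longrightarrow> hdist B (csc J z x) y = hdist B x y"
proof -
  assume z: "z \<noteq> 0"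
  have "Re (B (csc J z x) (csc J z x)) = (cmod z)^2 * Re (B x x)"
    by (rule Re_B_csc_csc)
  moreover have "cmod (B (csc J z x) y) = cmod z * cmod (B x y)" by (simp add: Bsimps norm_mult)
  ultimately show ?thesis using z
    by (simp add: hdist_def real_sqrt_mult mult.assoc)
qed

lemma hdist_sym: "hdist B x y = hdist B y x"
  unfolding hdist_def using B_herm[of x y] by (simp add: mult.commute)

lemma hdist_scale_right: "z \<noteq> 0 \<Longrightarrow> hdist B x (csc J z y) = hdist B x y"
  using hdist_scale_left hdist_sym by metis

lemma hdist_zero:
  assumes pp: "Re (B p p) > 0" and xx: "Re (B x x) > 0" and hd: "hdist B x p = 0"
  shows "x \<in> cspan1 J p"
proof -
  have Bpp_nz: "B p p \<noteq> 0" using pp by auto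
  define t where "t = B x p / B p p"
  define e where "e = x - csc J t p"
  have ep: "B e p = 0" using Bpp_nz by (simp add: e_def t_def Bsimps)
  have pe: "B p e = 0" using ep B_herm[of p e] by simp
  have x_eq: "x = csc J t p + e" by (simp add: e_def)
  show ?thesis
  proof (cases "e = 0")
    case True thus ?thesis using x_eq by (auto simp: cspan1_def)
  next
    case False
    hence E: "Re (B e e) < 0" using ND[OF pp ep] by fastforce
    define P where "P = Re (B p p)"
    have Bpp: "B p p = complex_of_real P" using B_self_real[of p] by (simp add: P_def)
    have Bxp: "B x p = t * complex_of_real P" using x_eq by (simp add: Bsimps ep Bpp)
    have "B x x = B (csc J t p) (csc J t p) + B e e"
      using x_eq by (simp add: B_add_left B_add_right ep pe B_csc_left B_csc_right)
    hence Bxx: "Re (B x x) = (cmod t)^2 * P + Re (B e e)"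
      by (simp add: Re_B_csc_csc P_def)
    have "(cmod (B x p))^2 = (cmod t)^2 * P^2" using pp by (simp add: Bxp norm_mult power_mult_distrib P_def)
    also have "\<dots> > Re (B x x) * P" using E pp by (simp add: Bxx P_def power2_eq_square algebra_simps mult_neg_pos)
    finally have lt: "Re (B x x) * Re (B p p) < (cmod (B x p))^2" by (simp add: P_def)
    have pos: "Re (B x x) * Re (B p p) > 0" using xx pp by simp
    have "sqrt (Re (B x x) * Re (B p p)) < cmod (B x p)"
      using lt by (metis norm_ge_zero real_sqrt_abs abs_of_nonneg real_sqrt_less_mono)
    hence gt: "cmod (B x p) / sqrt (Re (B x x) * Re (B p p)) > 1" using pos by simp
    define A where "A = cmod (B x p) / sqrt (Re (B x x) * Re (B p p))"
    have A_gt: "A > 1" using gt by (simp only: A_def)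
    have "arcosh A > 0" using arcosh_real_gt_1_iff[of A] A_gt by simp
    thus ?thesis using hd by (simp add: hdist_def A_def)
  qed
qed

end

locale rep = hs J B for J :: "'v::{real_inner,complete_space} \<Rightarrow> 'v" and B :: "'v \<Rightarrow> 'v \<Rightarrow> complex" +
  fixes \<rho> :: "complex^2^2 \<Rightarrow> 'v \<Rightarrow> 'v" and \<eta>1 \<eta>2 :: 'v
  assumes rep: "representation J B \<rho>" and irr: "irreducible J B \<rho>"
    and e11: "B \<eta>1 \<eta>1 = 0" and e22: "B \<eta>2 \<eta>2 = 0" and e12: "B \<eta>1 \<eta>2 = 1"
    and fix1: "\<forall>l>0. \<forall>b'. \<rho> (gmat l b') \<eta>1 \<in> cspan1 J \<eta>1"
    and fix2: "\<forall>l>0. \<rho> (gmat l 0) \<eta>2 \<in> cspan1 J \<eta>2"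
begin

lemma e21: "B \<eta>2 \<eta>1 = 1" using B_herm[of \<eta>2 \<eta>1] e12 by simp

lemma unit: "g \<in> SU11 \<Longrightarrow> unitary_B J B (\<rho> g)"
  using rep unfolding representation_def by blast

lemma r_lin: "g \<in> SU11 \<Longrightarrow> linear (\<rho> g)"
  using unit unfolding unitary_B_def by (blast intro: bounded_linear.linear)
lemma r_J: "g \<in> SU11 \<Longrightarrow> \<rho> g (J v) = J (\<rho> g v)"
  using unit unfolding unitary_B_def by blast
lemma r_add: "g \<in> SU11 \<Longrightarrow> \<rho> g (v + w) = \<rho> g v + \<rho> g w"
  using r_lin linear_add by blast
lemma r_0: "g \<in> SU11 \<Longrightarrow> \<rho> g 0 = 0"
  using r_lin linear_0 by blast
lemma r_csc: "g \<in> SU11 \<Longrightarrow> \<rho> g (csc J z v) = csc J z (\<rho> g v)"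
  using r_lin[of g] r_J[of g v] by (simp add: csc_def linear_add linear_scale)
lemma r_B: "g \<in> SU11 \<Longrightarrow> B (\<rho> g v) (\<rho> g w) = B v w"
  using unit unfolding unitary_B_def by blast
lemma r_inj: "g \<in> SU11 \<Longrightarrow> \<rho> g v = \<rho> g w \<Longrightarrow> v = w"
  using unit unfolding unitary_B_def by (meson bij_def injD)
lemma r_surj: "g \<in> SU11 \<Longrightarrow> \<exists>v. \<rho> g v = y"
  using unit unfolding unitary_B_def by (metis bij_def surjD)
lemma r_nz: "g \<in> SU11 \<Longrightarrow> v \<noteq> 0 \<Longrightarrow> \<rho> g v \<noteq> 0"
  using r_inj r_0 by metis

lemma r_mult: "g \<in> SU11 \<Longrightarrow> h \<in> SU11 \<Longrightarrow> \<exists>\<mu>. cmod \<mu> = 1 \<and> (\<forall>v. \<rho> (g ** h) v = csc J \<mu> (\<rho> g (\<rho> h v)))"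
  using rep unfolding representation_def by blast

lemma r_negI: "\<exists>\<mu>. cmod \<mu> = 1 \<and> (\<forall>v. \<rho> (- mat 1) v = csc J \<mu> v)"
  using rep unfolding representation_def by blast

lemma r_I: "\<exists>\<nu>. cmod \<nu> = 1 \<and> (\<forall>v. \<rho> (mat 1) v = csc J \<nu> v)"
proof -
  obtain \<mu> where mu: "cmod \<mu> = 1" "\<And>v. \<rho> (mat 1 ** mat 1) v = csc J \<mu> (\<rho> (mat 1) (\<rho> (mat 1) v))"
    using r_mult[OF mat1_SU11 mat1_SU11] by blast
  have mnz: "\<mu> \<noteq> 0" using mu by auto
  have "\<rho> (mat 1) y = csc J (1/\<mu>) y" for y
  proof -
    obtain v where v: "\<rho> (mat 1) v = y" using r_surj[OF mat1_SU11] by blast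
    have "\<rho> (mat 1) v = csc J \<mu> (\<rho> (mat 1) y)" using mu(2)[of v] v by simp
    hence "csc J (1/\<mu>) (\<rho> (mat 1) v) = \<rho> (mat 1) y" using mnz by (simp add: csc_mult)
    thus ?thesis using v by simp
  qed
  moreover have "cmod (1/\<mu>) = 1" using mu by (simp add: norm_divide)
  ultimately show ?thesis by blast
qed

lemma cspan1_iff: "x \<in> cspan1 J v \<longleftrightarrow> (\<exists>z. x = csc J z v)"
  by (auto simp: cspan1_def)

lemma eta1_nz: "\<eta>1 \<noteq> 0" using e12 by auto
lemma eta2_nz: "\<eta>2 \<noteq> 0" using e12 by auto

definition VV where "VV = {csc J x \<eta>1 + csc J y \<eta>2 | x y. True}"
definition pp where "pp = \<eta>1 + \<eta>2"

lemma B_comb_eta2: "B (csc J x \<eta>1 + csc J y \<eta>2) \<eta>2 = x"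
  by (simp add: Bsimps e12 e22)
lemma B_comb_eta1: "B (csc J x \<eta>1 + csc J y \<eta>2) \<eta>1 = y"
  by (simp add: Bsimps e11 e21)

lemma inVV: "v \<in> VV \<longleftrightarrow> v = csc J (B v \<eta>2) \<eta>1 + csc J (B v \<eta>1) \<eta>2"
proof
  assume "v \<in> VV"
  then obtain x y where v: "v = csc J x \<eta>1 + csc J y \<eta>2" unfolding VV_def by blast
  have "B v \<eta>2 = x" "B v \<eta>1 = y" unfolding v by (rule B_comb_eta2, rule B_comb_eta1)
  thus "v = csc J (B v \<eta>2) \<eta>1 + csc J (B v \<eta>1) \<eta>2" using v by simp
next
  assume "v = csc J (B v \<eta>2) \<eta>1 + csc J (B v \<eta>1) \<eta>2"
  thus "v \<in> VV" unfolding VV_def by blast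
qed

lemma VV_I: "csc J x \<eta>1 + csc J y \<eta>2 \<in> VV" unfolding VV_def by blast
lemma VV_add: "v \<in> VV \<Longrightarrow> w \<in> VV \<Longrightarrow> v + w \<in> VV"
proof -
  assume "v \<in> VV" "w \<in> VV"
  then obtain x y x' y' where "v = csc J x \<eta>1 + csc J y \<eta>2" "w = csc J x' \<eta>1 + csc J y' \<eta>2"
    unfolding VV_def by blast
  hence "v + w = csc J (x + x') \<eta>1 + csc J (y + y') \<eta>2" by (simp add: csc_add_scal algebra_simps)
  thus ?thesis by (simp add: VV_I)
qed
lemma VV_csc: "v \<in> VV \<Longrightarrow> csc J z v \<in> VV"
proof -
  assume "v \<in> VV"
  then obtain x y where "v = csc J x \<eta>1 + csc J y \<eta>2" unfolding VV_def by blast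
  hence "csc J z v = csc J (z * x) \<eta>1 + csc J (z * y) \<eta>2" by (simp add: csc_add_vec csc_mult)
  thus ?thesis by (simp add: VV_I)
qed
lemma VV_0: "0 \<in> VV" using VV_I[of 0 0] by simp
lemma eta1_VV: "\<eta>1 \<in> VV" using VV_I[of 1 0] by simp
lemma eta2_VV: "\<eta>2 \<in> VV" using VV_I[of 0 1] by simp
lemma span1_VV: "x \<in> cspan1 J \<eta>1 \<Longrightarrow> x \<in> VV" "x \<in> cspan1 J \<eta>2 \<Longrightarrow> x \<in> VV"
  using VV_csc eta1_VV eta2_VV by (auto simp: cspan1_iff)
lemma pp_VV: "pp \<in> VV" using VV_I[of 1 1] by (simp add: pp_def)
lemma B_pp: "B pp pp = 2" by (simp add: pp_def Bsimps e11 e12 e21 e22)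
lemma Re_B_pp: "Re (B pp pp) > 0" by (simp add: B_pp)
lemma pp_nz: "pp \<noteq> 0" using B_pp by auto

lemma B_comb: "B (csc J a1 \<eta>1 + csc J b1 \<eta>2) (csc J a2 \<eta>1 + csc J b2 \<eta>2) = a1 * cnj b2 + b1 * cnj a2"
  by (simp add: Bsimps e11 e12 e21 e22)

lemma gram_poly: "((a1::complex) * B1 + b1 * A1) * (a2 * B2 + b2 * A2) - (a1 * B2 + b1 * A2) * (a2 * B1 + b2 * A1)
   = - ((a1 * b2 - a2 * b1) * (A1 * B2 - A2 * B1))"
  by (simp add: algebra_simps)

lemma gram: "B u1 u1 * B u2 u2 - B u1 u2 * B u2 u1 = - ((a1 * b2 - a2 * b1) * cnj (a1 * b2 - a2 * b1))"
  if "u1 = csc J a1 \<eta>1 + csc J b1 \<eta>2" "u2 = csc J a2 \<eta>1 + csc J b2 \<eta>2"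
proof -
  have "B u1 u1 * B u2 u2 - B u1 u2 * B u2 u1 = (a1 * cnj b1 + b1 * cnj a1) * (a2 * cnj b2 + b2 * cnj a2)
     - (a1 * cnj b2 + b1 * cnj a2) * (a2 * cnj b1 + b2 * cnj a1)"
    using that by (simp only: B_comb)
  also have "\<dots> = - ((a1 * b2 - a2 * b1) * (cnj a1 * cnj b2 - cnj a2 * cnj b1))"
    by (rule gram_poly)
  finally show ?thesis by simp
qed

end

context rep begin
lemma QV: "g \<in> SU11 \<Longrightarrow> \<rho> g \<eta>1 \<in> VV \<Longrightarrow> \<rho> g \<eta>2 \<in> VV \<Longrightarrow> v \<in> VV \<Longrightarrow> \<rho> g v \<in> VV"
proof -
  assume g: "g \<in> SU11" and h: "\<rho> g \<eta>1 \<in> VV" "\<rho> g \<eta>2 \<in> VV" and "v \<in> VV"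
  then obtain x y where "v = csc J x \<eta>1 + csc J y \<eta>2" unfolding VV_def by blast
  hence "\<rho> g v = csc J x (\<rho> g \<eta>1) + csc J y (\<rho> g \<eta>2)" using g by (simp add: r_add r_csc)
  thus ?thesis using h by (simp add: VV_add VV_csc)
qed

definition QQ where "QQ g \<longleftrightarrow> \<rho> g \<eta>1 \<in> VV \<and> \<rho> g \<eta>2 \<in> VV"

lemma QQ_mult: "g \<in> SU11 \<Longrightarrow> h \<in> SU11 \<Longrightarrow> QQ g \<Longrightarrow> QQ h \<Longrightarrow> QQ (g ** h)"
proof -
  assume g: "g \<in> SU11" and h: "h \<in> SU11" and "QQ g" "QQ h"
  obtain \<mu> where mu: "\<And>v. \<rho> (g ** h) v = csc J \<mu> (\<rho> g (\<rho> h v))" using r_mult[OF g h] by blast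
  have g1: "\<rho> g \<eta>1 \<in> VV" "\<rho> g \<eta>2 \<in> VV" and h1: "\<rho> h \<eta>1 \<in> VV" "\<rho> h \<eta>2 \<in> VV"
    using \<open>QQ g\<close> \<open>QQ h\<close> unfolding QQ_def by auto
  have "\<rho> g (\<rho> h \<eta>1) \<in> VV" by (rule QV[OF g g1 h1(1)])
  moreover have "\<rho> g (\<rho> h \<eta>2) \<in> VV" by (rule QV[OF g g1 h1(2)])
  ultimately show ?thesis unfolding QQ_def mu by (simp add: VV_csc)
qed

lemma QQ_surj:
  assumes g: "g \<in> SU11" and Q: "QQ g" and y: "y \<in> VV" shows "\<exists>v\<in>VV. \<rho> g v = y"
proof -
  define a1 b1 a2 b2 where "a1 = B (\<rho> g \<eta>1) \<eta>2" "b1 = B (\<rho> g \<eta>1) \<eta>1" "a2 = B (\<rho> g \<eta>2) \<eta>2" "b2 = B (\<rho> g \<eta>2) \<eta>1"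
  have T1: "\<rho> g \<eta>1 = csc J a1 \<eta>1 + csc J b1 \<eta>2" using Q unfolding QQ_def a1_b1_a2_b2_def inVV by blast
  have T2: "\<rho> g \<eta>2 = csc J a2 \<eta>1 + csc J b2 \<eta>2" using Q unfolding QQ_def a1_b1_a2_b2_def inVV by blast
  define d where "d = a1 * b2 - a2 * b1"
  have "B (\<rho> g \<eta>1) (\<rho> g \<eta>1) * B (\<rho> g \<eta>2) (\<rho> g \<eta>2) - B (\<rho> g \<eta>1) (\<rho> g \<eta>2) * B (\<rho> g \<eta>2) (\<rho> g \<eta>1) = - (d * cnj d)"
    unfolding d_def by (rule gram[OF T1 T2])
  hence "d * cnj d = 1" using g by (simp add: r_B e11 e22 e12 e21)
  hence dnz: "d \<noteq> 0" by auto
  define x z where "x = B y \<eta>2" "z = B y \<eta>1"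
  have yeq: "y = csc J x \<eta>1 + csc J z \<eta>2" using y unfolding x_z_def inVV .
  define c1 c2 where "c1 = (b2 * x - a2 * z) / d" "c2 = (a1 * z - b1 * x) / d"
  have "\<rho> g (csc J c1 \<eta>1 + csc J c2 \<eta>2) = csc J c1 (\<rho> g \<eta>1) + csc J c2 (\<rho> g \<eta>2)"
    using g by (simp only: r_add r_csc)
  also have "\<dots> = (csc J (c1 * a1) \<eta>1 + csc J (c1 * b1) \<eta>2) + (csc J (c2 * a2) \<eta>1 + csc J (c2 * b2) \<eta>2)"
    by (simp only: T1 T2 csc_add_vec csc_mult)
  also have "\<dots> = csc J (c1 * a1 + c2 * a2) \<eta>1 + csc J (c1 * b1 + c2 * b2) \<eta>2"
    by (simp only: csc_add_scal add_ac)
  also have "c1 * a1 + c2 * a2 = x"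
  proof -
    have "(b2 * x - a2 * z) * a1 + (a1 * z - b1 * x) * a2 = d * x" by (simp add: d_def algebra_simps)
    thus ?thesis using dnz by (simp add: c1_c2_def field_simps)
  qed
  also have "c1 * b1 + c2 * b2 = z"
  proof -
    have "(b2 * x - a2 * z) * b1 + (a1 * z - b1 * x) * b2 = d * z" by (simp add: d_def algebra_simps)
    thus ?thesis using dnz by (simp add: c1_c2_def field_simps)
  qed
  finally show ?thesis using yeq VV_I by blast
qed

lemma QQ_inv:
  assumes g: "g \<in> SU11" and h: "h \<in> SU11" and gh: "g ** h = mat 1" and Q: "QQ h" shows "QQ g"
proof -
  obtain \<mu> where mu: "cmod \<mu> = 1" "\<And>v. \<rho> (g ** h) v = csc J \<mu> (\<rho> g (\<rho> h v))" using r_mult[OF g h] by blast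
  obtain \<nu> where nu: "\<And>v. \<rho> (mat 1) v = csc J \<nu> v" using r_I by blast
  have mnz: "\<mu> \<noteq> 0" using mu by auto
  have key: "\<rho> g (\<rho> h v) = csc J (\<nu> / \<mu>) v" for v
  proof -
    have "csc J \<mu> (\<rho> g (\<rho> h v)) = csc J \<nu> v" using mu(2)[of v] nu[of v] gh by simp
    hence "csc J (1/\<mu>) (csc J \<mu> (\<rho> g (\<rho> h v))) = csc J (1/\<mu>) (csc J \<nu> v)" by simp
    thus ?thesis using mnz by (simp add: csc_mult)
  qed
  have "\<rho> g y \<in> VV" if yV: "y \<in> VV" for y
  proof -
    obtain v where v: "v \<in> VV" "\<rho> h v = y" using QQ_surj[OF h Q yV] by blast
    have "\<rho> g y = csc J (\<nu> / \<mu>) v" using key[of v] v by simp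
    thus ?thesis using v VV_csc by simp
  qed
  thus ?thesis unfolding QQ_def using eta1_VV eta2_VV by simp
qed

end

context rep begin
lemma coeff_gen: "g \<in> SU11 \<Longrightarrow> x \<noteq> 0 \<Longrightarrow> \<rho> g x \<in> cspan1 J x \<Longrightarrow> \<exists>z. z \<noteq> 0 \<and> \<rho> g x = csc J z x"
proof -
  assume g: "g \<in> SU11" and x: "x \<noteq> 0" and "\<rho> g x \<in> cspan1 J x"
  then obtain z where z: "\<rho> g x = csc J z x" unfolding cspan1_iff by blast
  have "\<rho> g x \<noteq> 0" by (rule r_nz[OF g x])
  hence "z \<noteq> 0" using z by auto
  thus ?thesis using z by blast
qed
lemma coeff1: "g \<in> SU11 \<Longrightarrow> \<rho> g \<eta>1 \<in> cspan1 J \<eta>1 \<Longrightarrow> \<exists>z. z \<noteq> 0 \<and> \<rho> g \<eta>1 = csc J z \<eta>1"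
  using coeff_gen eta1_nz by blast
lemma coeff2: "g \<in> SU11 \<Longrightarrow> \<rho> g \<eta>2 \<in> cspan1 J \<eta>2 \<Longrightarrow> \<exists>z. z \<noteq> 0 \<and> \<rho> g \<eta>2 = csc J z \<eta>2"
  using coeff_gen eta2_nz by blast

lemma EIG:
  assumes l: "l > 0" and a1: "\<rho> (gmat l 0) \<eta>1 = csc J \<alpha> \<eta>1" and na: "cmod \<alpha> \<noteq> 1"
    and uu: "B u u = 0" and ug: "\<rho> (gmat l 0) u = csc J \<gamma> u"
  shows "u \<in> VV"
proof -
  have gS: "gmat l 0 \<in> SU11" using l by (simp add: gmat_SU11)
  obtain \<beta> where b2: "\<rho> (gmat l 0) \<eta>2 = csc J \<beta> \<eta>2" using fix2 l by (auto simp: cspan1_iff)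
  have ab: "\<alpha> * cnj \<beta> = 1" using r_B[OF gS, of \<eta>1 \<eta>2] by (simp add: a1 b2 Bsimps e12) (simp add: mult.commute)
  define x y where "x = B u \<eta>2" "y = B u \<eta>1"
  have hx: "\<gamma> * cnj \<beta> * x = x" using r_B[OF gS, of u \<eta>2] by (simp add: ug b2 Bsimps x_y_def mult.assoc) (simp add: mult.commute)
  have hy: "\<gamma> * cnj \<alpha> * y = y" using r_B[OF gS, of u \<eta>1] by (simp add: ug a1 Bsimps x_y_def mult.assoc) (simp add: mult.commute)
  have xy: "x * cnj y = 0"
  proof (rule ccontr)
    assume "x * cnj y \<noteq> 0"
    hence "x \<noteq> 0" "y \<noteq> 0" by auto
    hence "\<gamma> * cnj \<beta> = 1" "\<gamma> * cnj \<alpha> = 1" using hx hy by auto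
    hence "cnj \<beta> = cnj \<alpha>" by (metis mult_cancel_left mult_zero_left zero_neq_one)
    hence "\<alpha> * cnj \<alpha> = 1" using ab by simp
    hence "complex_of_real ((cmod \<alpha>)^2) = 1" by (simp only: cnj_mult_self)
    hence "(cmod \<alpha>)^2 = 1" by (simp only: of_real_eq_1_iff)
    thus False using na norm_ge_zero[of \<alpha>] by (simp add: power2_eq_1_iff)
  qed
  define e where "e = u - csc J x \<eta>1 - csc J y \<eta>2"
  have e2: "B e \<eta>2 = 0" by (simp add: e_def Bsimps x_y_def e12 e22)
  have e1: "B e \<eta>1 = 0" by (simp add: e_def Bsimps x_y_def e11 e21)
  have ue: "u = csc J x \<eta>1 + csc J y \<eta>2 + e" by (simp add: e_def)
  have "B u u = B (csc J x \<eta>1 + csc J y \<eta>2) (csc J x \<eta>1 + csc J y \<eta>2) + B e e"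
  proof -
    have 1: "B e (csc J x \<eta>1 + csc J y \<eta>2) = 0" by (simp add: Bsimps e1 e2)
    have 2: "B (csc J x \<eta>1 + csc J y \<eta>2) e = 0" using B_herm[of "csc J x \<eta>1 + csc J y \<eta>2" e] 1 by simp
    define w where "w = csc J x \<eta>1 + csc J y \<eta>2"
    have uw: "u = w + e" using ue by (simp add: w_def)
    have "B u u = B w w + B w e + B e w + B e e" unfolding uw by (simp add: B_add_left B_add_right)
    thus ?thesis using 1 2 by (simp add: w_def)
  qed
  also have "B (csc J x \<eta>1 + csc J y \<eta>2) (csc J x \<eta>1 + csc J y \<eta>2) = x * cnj y + y * cnj x"
    by (rule B_comb)
  also have "y * cnj x = cnj (x * cnj y)" by simp
  finally have "B e e = 0" using uu xy by simp
  moreover have "B e pp = 0" by (simp add: pp_def Bsimps e1 e2)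
  ultimately have "e = 0" using ND[OF Re_B_pp] by simp
  thus ?thesis using ue VV_I by simp
qed

end

lemma R_dec: "l \<noteq> 0 \<Longrightarrow> gmat l b = gmat 1 (b * l) ** gmat l 0"
  by (simp add: gmat_mk mk_mult mk_eq)

context rep begin

lemma B_blin: "bounded_linear (\<lambda>v. B v w)"
proof -
  have "\<exists>C. \<forall>v w. cmod (B v w) \<le> C * norm v * norm w"
    using sndg unfolding strongly_nondegenerate_def by (rule conjunct1)
  then obtain C where C: "\<And>v w. cmod (B v w) \<le> C * norm v * norm w" by blast
  show ?thesis
  proof (rule bounded_linear_intro[where K = "C * norm w"])
    show "B (x + y) w = B x w + B y w" for x y by (rule B_add_left)
    show "B (r *\<^sub>R x) w = r *\<^sub>R B x w" for r x by (simp add: B_scaleR_left scaleR_conv_of_real)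
    show "norm (B x w) \<le> norm x * (C * norm w)" for x using C[of x w] by (simp add: mult_ac)
  qed
qed

lemma B_cont: "continuous_on UNIV (\<lambda>v. B v w)"
  using B_blin by (simp add: linear_continuous_on)

lemma csc_cont: "continuous_on UNIV (\<lambda>v. csc J (B v w) u)"
  unfolding csc_def by (intro continuous_intros continuous_on_compose2[OF continuous_on_Re B_cont]
      continuous_on_compose2[OF continuous_on_Im B_cont]) auto

lemma VV_closed: "closed VV"
proof -
  have "VV = {v. v = csc J (B v \<eta>2) \<eta>1 + csc J (B v \<eta>1) \<eta>2}" using inVV by blast
  moreover have "closed {v. v = csc J (B v \<eta>2) \<eta>1 + csc J (B v \<eta>1) \<eta>2}"
    by (intro closed_Collect_eq continuous_on_id continuous_on_add csc_cont)
  ultimately show ?thesis by simp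
qed

lemma VV_subspace: "complex_subspace J VV"
  unfolding complex_subspace_def subspace_def
proof (intro conjI ballI allI)
  show "0 \<in> VV" by (rule VV_0)
  show "x + y \<in> VV" if "x \<in> VV" "y \<in> VV" for x y using that by (rule VV_add)
  show "c *\<^sub>R x \<in> VV" if "x \<in> VV" for c x using VV_csc[OF that, of "complex_of_real c"] by simp
  show "J ` VV \<subseteq> VV" using VV_csc[of _ \<i>] by (auto simp: csc_ii)
qed

lemma VV_ne: "VV \<noteq> UNIV"
proof
  assume U: "VV = UNIV"
  obtain u :: "nat \<Rightarrow> 'v" where u: "\<forall>i<2. \<forall>j<2. B (u i) (u j) = (if i = j then -1 else 0)"
    using sig unfolding signature_1_inf_def by blast
  have u0: "u 0 = csc J (B (u 0) \<eta>2) \<eta>1 + csc J (B (u 0) \<eta>1) \<eta>2" using U inVV by blast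
  have u1: "u 1 = csc J (B (u 1) \<eta>2) \<eta>1 + csc J (B (u 1) \<eta>1) \<eta>2" using U inVV by blast
  define d where "d = B (u 0) \<eta>2 * B (u 1) \<eta>1 - B (u 1) \<eta>2 * B (u 0) \<eta>1"
  have "B (u 0) (u 0) * B (u 1) (u 1) - B (u 0) (u 1) * B (u 1) (u 0) = - (d * cnj d)"
    unfolding d_def by (rule gram[OF u0 u1])
  hence "1 = - complex_of_real ((cmod d)^2)" using u by (simp add: cnj_mult_self)
  hence "complex_of_real ((cmod d)^2) = - 1" by (metis minus_minus)
  hence "(cmod d)^2 = (-1::real)" by (metis of_real_1 of_real_minus of_real_eq_iff)
  thus False using zero_le_power2[of "cmod d"] by linarith
qed

lemma r_scal_ex: "\<exists>\<mu>. \<mu> \<noteq> 0 \<and> (\<forall>v. \<rho> (- mat 1) v = csc J \<mu> v)"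
proof -
  obtain \<mu> where "cmod \<mu> = 1" "\<forall>v. \<rho> (- mat 1) v = csc J \<mu> v" using r_negI by blast
  moreover hence "\<mu> \<noteq> 0" by auto
  ultimately show ?thesis by blast
qed
lemma r_I_ex: "\<exists>\<mu>. \<mu> \<noteq> 0 \<and> (\<forall>v. \<rho> (mat 1) v = csc J \<mu> v)"
proof -
  obtain \<mu> where "cmod \<mu> = 1" "\<forall>v. \<rho> (mat 1) v = csc J \<mu> v" using r_I by blast
  moreover hence "\<mu> \<noteq> 0" by auto
  ultimately show ?thesis by blast
qed

lemma QQ_a: "l > 0 \<Longrightarrow> QQ (gmat l 0)"
  using fix1 fix2 span1_VV unfolding QQ_def by blast

lemma QQ_negI: "QQ (- mat 1)"
  using r_scal_ex VV_csc eta1_VV eta2_VV unfolding QQ_def by metis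
lemma QQ_I: "QQ (mat 1)"
  using r_I_ex VV_csc eta1_VV eta2_VV unfolding QQ_def by metis

lemma eig_ww:
  assumes l0: "l0 > 0" and x: "\<rho> (gmat (1/l0) 0) x = csc J c x"
  shows "\<exists>\<gamma>. \<rho> (gmat l0 0) (\<rho> ww x) = csc J \<gamma> (\<rho> ww x)"
proof -
  have S1: "gmat (1/l0) 0 \<in> SU11" "gmat l0 0 \<in> SU11" using l0 by (simp_all add: gmat_SU11)
  have eq: "ww ** gmat (1/l0) 0 = gmat l0 0 ** ww" using R_wa[of "1/l0"] l0 by simp
  obtain \<mu> where mu: "cmod \<mu> = 1" "\<And>v. \<rho> (ww ** gmat (1/l0) 0) v = csc J \<mu> (\<rho> ww (\<rho> (gmat (1/l0) 0) v))"
    using r_mult[OF ww_SU11 S1(1)] by blast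
  obtain \<mu>' where mu': "cmod \<mu>' = 1" "\<And>v. \<rho> (gmat l0 0 ** ww) v = csc J \<mu>' (\<rho> (gmat l0 0) (\<rho> ww v))"
    using r_mult[OF S1(2) ww_SU11] by blast
  have "csc J \<mu>' (\<rho> (gmat l0 0) (\<rho> ww x)) = csc J (\<mu> * c) (\<rho> ww x)"
    using mu(2)[of x] mu'(2)[of x] eq x by (simp add: r_csc[OF ww_SU11] csc_mult)
  hence "csc J (1/\<mu>') (csc J \<mu>' (\<rho> (gmat l0 0) (\<rho> ww x))) = csc J (1/\<mu>') (csc J (\<mu> * c) (\<rho> ww x))" by simp
  moreover have "\<mu>' \<noteq> 0" using mu' by auto
  ultimately have "\<rho> (gmat l0 0) (\<rho> ww x) = csc J (1/\<mu>' * (\<mu> * c)) (\<rho> ww x)" by (simp add: csc_mult)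
  thus ?thesis by blast
qed

lemma HYP:
  assumes l0: "l0 > 0" and a0: "\<rho> (gmat l0 0) \<eta>1 = csc J \<alpha> \<eta>1" and na: "cmod \<alpha> \<noteq> 1"
    and b: "b \<noteq> 0" and bV: "\<rho> (gmat 1 b) \<eta>2 \<in> VV"
  shows False
proof -
  have Qb: "QQ (gmat 1 b)" using fix1 bV span1_VV unfolding QQ_def by fastforce
  have Qpos: "QQ (gmat 1 (l^2 * b))" if l: "l > 0" for l
  proof -
    have "QQ ((gmat l 0 ** gmat 1 b) ** gmat (1/l) 0)"
      using l by (intro QQ_mult SU11_mult gmat_SU11 QQ_a Qb) auto
    thus ?thesis using R_conj_n[of l b] l by simp
  qed
  have Qsame: "QQ (gmat 1 b')" if bb: "b' * b > 0" for b'
  proof -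
    have pos: "b' / b > 0" using bb by (simp add: zero_less_mult_iff zero_less_divide_iff)
    have "(sqrt (b' / b))^2 * b = b'" using pos b by simp
    thus ?thesis using Qpos[of "sqrt (b'/b)"] pos by simp
  qed
  have Qn: "QQ (gmat 1 b')" for b'
  proof (cases "b' * b > 0")
    case True thus ?thesis by (rule Qsame)
  next
    case False
    show ?thesis
    proof (cases "b' = 0")
      case True thus ?thesis using QQ_I gmat_1_0 by simp
    next
      case False
      hence "(- b') * b > 0" using \<open>\<not> b' * b > 0\<close> b
        by (simp add: mult_less_0_iff zero_less_mult_iff) (smt (verit) mult_less_0_iff zero_less_mult_iff)
      hence Q': "QQ (gmat 1 (- b'))" by (rule Qsame)
      have "gmat 1 b' ** gmat 1 (- b') = mat 1" by (simp add: R_nn gmat_1_0)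
      thus ?thesis using QQ_inv[OF gmat_SU11 gmat_SU11 _ Q'] by simp
    qed
  qed
  have Qg: "QQ (gmat l b')" if l: "l > 0" for l b'
    using R_dec[of l b'] l by (simp add: QQ_mult gmat_SU11 Qn QQ_a)
  have Qw: "QQ ww"
  proof -
    have li: "1/l0 > 0" using l0 by simp
    have "\<rho> (gmat (1/l0) 0) \<eta>1 \<in> cspan1 J \<eta>1" using fix1 li by blast
    then obtain c1 where c1: "\<rho> (gmat (1/l0) 0) \<eta>1 = csc J c1 \<eta>1" by (auto simp: cspan1_iff)
    have "\<rho> (gmat (1/l0) 0) \<eta>2 \<in> cspan1 J \<eta>2" using fix2 li by blast
    then obtain c2 where c2: "\<rho> (gmat (1/l0) 0) \<eta>2 = csc J c2 \<eta>2" by (auto simp: cspan1_iff)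
    obtain \<gamma>1 where g1: "\<rho> (gmat l0 0) (\<rho> ww \<eta>1) = csc J \<gamma>1 (\<rho> ww \<eta>1)" using eig_ww[OF l0 c1] by blast
    obtain \<gamma>2 where g2: "\<rho> (gmat l0 0) (\<rho> ww \<eta>2) = csc J \<gamma>2 (\<rho> ww \<eta>2)" using eig_ww[OF l0 c2] by blast
    have "\<rho> ww \<eta>1 \<in> VV" using EIG[OF l0 a0 na _ g1] r_B[OF ww_SU11] e11 by simp
    moreover have "\<rho> ww \<eta>2 \<in> VV" using EIG[OF l0 a0 na _ g2] r_B[OF ww_SU11] e22 by simp
    ultimately show ?thesis unfolding QQ_def by simp
  qed
  have Qall: "QQ g" if g: "g \<in> SU11" for g
  proof -
    obtain l b' t where l: "l > 0" and cases: "g = gmat l b' \<or> g = (- mat 1) ** gmat l b' \<or>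
           g = gmat 1 t ** (ww ** gmat l b') \<or> g = gmat 1 t ** (ww ** ((- mat 1) ** gmat l b'))"
      using SU11_gen[OF g] by blast
    have S: "gmat l b' \<in> SU11" "gmat 1 t \<in> SU11" using l by (simp_all add: gmat_SU11)
    have Q1: "QQ ((- mat 1) ** gmat l b')" using S by (intro QQ_mult negmat1_SU11 QQ_negI Qg l)
    have S2: "(- mat 1) ** gmat l b' \<in> SU11" using S by (simp add: SU11_mult negmat1_SU11)
    show ?thesis using cases
    proof (elim disjE)
      assume "g = gmat 1 t ** (ww ** gmat l b')"
      thus ?thesis using S by (simp add: QQ_mult SU11_mult ww_SU11 Qw Qn Qg l)
    next
      assume "g = gmat 1 t ** (ww ** ((- mat 1) ** gmat l b'))"
      thus ?thesis using S S2 by (simp add: QQ_mult SU11_mult ww_SU11 Qw Qn Q1)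
    qed (simp_all add: Qg l Q1)
  qed
  have "\<forall>g\<in>SU11. \<rho> g ` VV \<subseteq> VV" using Qall QV unfolding QQ_def by blast
  moreover have "\<exists>v\<in>VV. Re (B v v) > 0" using pp_VV Re_B_pp by blast
  ultimately show False using irr VV_subspace VV_closed VV_ne unfolding irreducible_def by blast
qed

end

context rep begin

lemma hdist_unit: "g \<in> SU11 \<Longrightarrow> hdist B (\<rho> g x) (\<rho> g y) = hdist B x y"
  by (simp add: hdist_def r_B)

lemma conj_fix:
  assumes aa: "\<forall>l>0. \<rho> (gmat l 0) pp \<in> cspan1 J pp" and g: "g \<in> SU11"
    and L: "\<forall>k. L k > 0" and qdef: "\<forall>k. q k = (gmat (L k) 0 ** g) ** gmat (1 / L k) 0"
    and qlim: "q \<longlonglongrightarrow> mat 1" and qne: "\<forall>k. q k \<noteq> mat 1"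
  shows "\<rho> g pp \<in> cspan1 J pp"
proof -
  obtain \<nu> where nu: "cmod \<nu> = 1" "\<And>v. \<rho> (mat 1) v = csc J \<nu> v" using r_I by blast
  have nnz: "\<nu> \<noteq> 0" using nu by auto
  have qS: "q k \<in> SU11" for k
  proof -
    have "L k \<noteq> 0" "1 / L k \<noteq> 0" using L by (auto simp: less_imp_neq[symmetric])
    hence "(gmat (L k) 0 ** g) ** gmat (1 / L k) 0 \<in> SU11" using g by (intro SU11_mult gmat_SU11)
    thus ?thesis using qdef by simp
  qed
  have const: "hdist B (\<rho> (q k) pp) (\<rho> (mat 1) pp) = hdist B (\<rho> g pp) pp" for k
  proof -
    define A A' where "A = gmat (L k) 0" "A' = gmat (1 / L k) 0"
    have Lk: "L k \<noteq> 0" "1 / L k \<noteq> 0" using L by (auto simp: less_imp_neq[symmetric])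
    have SA: "A \<in> SU11" "A' \<in> SU11" unfolding A_A'_def using Lk by (simp_all add: gmat_SU11)
    have "\<rho> A' pp \<in> cspan1 J pp" using aa L unfolding A_A'_def by simp
    then obtain a' where a': "\<rho> A' pp = csc J a' pp" by (auto simp: cspan1_iff)
    have "\<rho> A pp \<in> cspan1 J pp" using aa L unfolding A_A'_def by simp
    then obtain a where a: "\<rho> A pp = csc J a pp" by (auto simp: cspan1_iff)
    have anz: "a \<noteq> 0" using r_nz[OF SA(1) pp_nz] a by auto
    have a'nz: "a' \<noteq> 0" using r_nz[OF SA(2) pp_nz] a' by auto
    obtain \<mu>1 where m1: "cmod \<mu>1 = 1" "\<And>v. \<rho> ((A ** g) ** A') v = csc J \<mu>1 (\<rho> (A ** g) (\<rho> A' v))"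
      using r_mult[OF SU11_mult[OF SA(1) g] SA(2)] by blast
    obtain \<mu>2 where m2: "cmod \<mu>2 = 1" "\<And>v. \<rho> (A ** g) v = csc J \<mu>2 (\<rho> A (\<rho> g v))"
      using r_mult[OF SA(1) g] by blast
    have qk: "q k = (A ** g) ** A'" using qdef by (simp add: A_A'_def)
    have "\<rho> (q k) pp = csc J \<mu>1 (\<rho> (A ** g) (\<rho> A' pp))" by (simp only: qk m1(2))
    also have "\<dots> = csc J \<mu>1 (csc J a' (\<rho> (A ** g) pp))" by (simp only: a' r_csc[OF SU11_mult[OF SA(1) g]])
    also have "\<dots> = csc J \<mu>1 (csc J a' (csc J \<mu>2 (\<rho> A (\<rho> g pp))))" by (simp only: m2(2))
    also have "\<dots> = csc J (\<mu>1 * (a' * \<mu>2)) (\<rho> A (\<rho> g pp))" by (simp only: csc_mult)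
    finally have "\<rho> (q k) pp = csc J (\<mu>1 * (a' * \<mu>2)) (\<rho> A (\<rho> g pp))" .
    moreover have "\<mu>1 * (a' * \<mu>2) \<noteq> 0" using m1 m2 a'nz by auto
    ultimately have "hdist B (\<rho> (q k) pp) (\<rho> (mat 1) pp) = hdist B (\<rho> A (\<rho> g pp)) pp"
      by (simp add: nu(2) hdist_scale_left hdist_scale_right nnz)
    also have "hdist B (\<rho> A (\<rho> g pp)) pp = hdist B (\<rho> A (\<rho> g pp)) (csc J a pp)"
      using anz by (simp add: hdist_scale_right)
    also have "\<dots> = hdist B (\<rho> g pp) pp" by (simp only: a[symmetric] hdist_unit[OF SA(1)])
    finally show ?thesis .
  qed
  have "((\<lambda>h. hdist B (\<rho> h pp) (\<rho> (mat 1) pp)) \<longlongrightarrow> 0) (at (mat 1) within SU11)"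
    using rep Re_B_pp mat1_SU11 unfolding representation_def by blast
  moreover have "filterlim q (at (mat 1) within SU11) sequentially"
    unfolding filterlim_at using qS qne qlim by simp
  ultimately have "(\<lambda>k. hdist B (\<rho> (q k) pp) (\<rho> (mat 1) pp)) \<longlonglongrightarrow> 0"
    by (rule filterlim_compose)
  hence "(\<lambda>k. hdist B (\<rho> g pp) pp) \<longlonglongrightarrow> 0" using const by simp
  hence "hdist B (\<rho> g pp) pp = 0" by (simp add: LIMSEQ_const_iff)
  moreover have "Re (B (\<rho> g pp) (\<rho> g pp)) > 0" using g Re_B_pp by (simp add: r_B)
  ultimately show ?thesis using hdist_zero[OF Re_B_pp] by blast
qed

definition RR where "RR g \<longleftrightarrow> \<rho> g pp \<in> cspan1 J pp"

lemma RR_mult: "g \<in> SU11 \<Longrightarrow> h \<in> SU11 \<Longrightarrow> RR g \<Longrightarrow> RR h \<Longrightarrow> RR (g ** h)"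
proof -
  assume g: "g \<in> SU11" and h: "h \<in> SU11" and "RR g" "RR h"
  then obtain z w where z: "\<rho> g pp = csc J z pp" and w: "\<rho> h pp = csc J w pp"
    unfolding RR_def cspan1_iff by blast
  obtain \<mu> where mu: "\<And>v. \<rho> (g ** h) v = csc J \<mu> (\<rho> g (\<rho> h v))" using r_mult[OF g h] by blast
  have "\<rho> (g ** h) pp = csc J (\<mu> * (w * z)) pp" using mu[of pp] w z g by (simp add: r_csc csc_mult)
  thus ?thesis unfolding RR_def cspan1_iff by blast
qed

lemma RR_scalar: "(\<forall>v. \<rho> g v = csc J \<mu> v) \<Longrightarrow> RR g"
  unfolding RR_def cspan1_iff by blast

lemma ELL:
  assumes ell: "\<forall>l>0. \<forall>\<alpha>. \<rho> (gmat l 0) \<eta>1 = csc J \<alpha> \<eta>1 \<longrightarrow> cmod \<alpha> = 1"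
  shows False
proof -
  have Ra: "RR (gmat l 0)" if l: "l > 0" for l
  proof -
    have S: "gmat l 0 \<in> SU11" using l by (simp add: gmat_SU11)
    have "\<rho> (gmat l 0) \<eta>1 \<in> cspan1 J \<eta>1" using fix1 l by blast
    then obtain \<alpha> where a: "\<rho> (gmat l 0) \<eta>1 = csc J \<alpha> \<eta>1" by (auto simp: cspan1_iff)
    have "\<rho> (gmat l 0) \<eta>2 \<in> cspan1 J \<eta>2" using fix2 l by blast
    then obtain \<beta> where b: "\<rho> (gmat l 0) \<eta>2 = csc J \<beta> \<eta>2" by (auto simp: cspan1_iff)
    have ab: "\<alpha> * cnj \<beta> = 1" using r_B[OF S, of \<eta>1 \<eta>2] by (simp add: a b Bsimps e12) (simp add: mult.commute)
    have "cmod \<alpha> = 1" using ell l a by blast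
    hence aa: "\<alpha> * cnj \<alpha> = 1" by (simp add: cnj_mult_self)
    have anz: "\<alpha> \<noteq> 0" using aa by auto
    have "cnj \<beta> = cnj \<alpha>" using ab aa anz by (metis mult_left_cancel)
    hence "\<beta> = \<alpha>" by simp
    hence "\<rho> (gmat l 0) pp = csc J \<alpha> pp" using S by (simp add: pp_def r_add a b csc_add_vec)
    thus ?thesis unfolding RR_def cspan1_iff by blast
  qed
  have aa: "\<forall>l>0. \<rho> (gmat l 0) pp \<in> cspan1 J pp" using Ra unfolding RR_def by blast
  have RI: "RR (mat 1)" using r_I RR_scalar by blast
  have RnI: "RR (- mat 1)" using r_negI RR_scalar by blast
  have Rn: "RR (gmat 1 b)" for b
  proof (cases "b = 0")
    case True thus ?thesis using RI gmat_1_0 by simp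
  next
    case False
    define L where "L k = 1 / (real k + 1)" for k
    define q where "q k = gmat 1 (b / (real k + 1)^2)" for k
    have L: "\<forall>k. L k > 0" by (simp add: L_def)
    have qdef: "\<forall>k. q k = (gmat (L k) 0 ** gmat 1 b) ** gmat (1 / L k) 0"
    proof
      fix k
      have "(gmat (L k) 0 ** gmat 1 b) ** gmat (1 / L k) 0 = gmat 1 ((L k)^2 * b)"
        using L by (intro R_conj_n) (simp add: less_imp_neq[symmetric])
      also have "(L k)^2 * b = b / (real k + 1)^2" by (simp add: L_def power_divide)
      finally show "q k = (gmat (L k) 0 ** gmat 1 b) ** gmat (1 / L k) 0" by (simp add: q_def)
    qed
    have qlim: "q \<longlonglongrightarrow> mat 1" unfolding q_def by (rule gmat_seq)
    have qne: "\<forall>k. q k \<noteq> mat 1" using False by (simp add: q_def gmat_ne1)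
    show ?thesis unfolding RR_def by (rule conj_fix[OF aa gmat_SU11 L qdef qlim qne]) simp
  qed
  have Rm: "RR (mm 1)"
  proof -
    define L where "L k = real k + 1" for k
    define q where "q k = mm (1 / (real k + 1)^2)" for k
    have L: "\<forall>k. L k > 0" by (simp add: L_def)
    have qdef: "\<forall>k. q k = (gmat (L k) 0 ** mm 1) ** gmat (1 / L k) 0"
    proof
      fix k
      have "(gmat (L k) 0 ** mm 1) ** gmat (1 / L k) 0 = mm (1 / (L k)^2)"
        using L by (intro R_conj_m) (simp add: less_imp_neq[symmetric])
      thus "q k = (gmat (L k) 0 ** mm 1) ** gmat (1 / L k) 0" by (simp add: q_def L_def)
    qed
    have qlim: "q \<longlonglongrightarrow> mat 1" unfolding q_def by (rule mm_seq)
    have qne: "\<forall>k. q k \<noteq> mat 1" by (simp add: q_def mm_ne1)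
    show ?thesis unfolding RR_def by (rule conj_fix[OF aa mm_SU11 L qdef qlim qne])
  qed
  have Rg: "RR (gmat l b)" if l: "l > 0" for l b
    using R_dec[of l b] l by (simp add: RR_mult gmat_SU11 Rn Ra)
  have Rw: "RR ww"
  proof -
    have S1: "gmat 1 1 \<in> SU11" by (simp add: gmat_SU11)
    have "RR (gmat 1 1 ** (mm 1 ** gmat 1 1))"
      by (intro RR_mult S1 mm_SU11 SU11_mult Rn Rm)
    thus ?thesis using R_w by simp
  qed
  have Rall: "RR g" if g: "g \<in> SU11" for g
  proof -
    obtain l b' t where l: "l > 0" and cases: "g = gmat l b' \<or> g = (- mat 1) ** gmat l b' \<or>
           g = gmat 1 t ** (ww ** gmat l b') \<or> g = gmat 1 t ** (ww ** ((- mat 1) ** gmat l b'))"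
      using SU11_gen[OF g] by blast
    have S: "gmat l b' \<in> SU11" "gmat 1 t \<in> SU11" using l by (simp_all add: gmat_SU11)
    have R1: "RR ((- mat 1) ** gmat l b')" using S by (intro RR_mult negmat1_SU11 RnI Rg l)
    have S2: "(- mat 1) ** gmat l b' \<in> SU11" using S by (simp add: SU11_mult negmat1_SU11)
    show ?thesis using cases
    proof (elim disjE)
      assume "g = gmat 1 t ** (ww ** gmat l b')"
      thus ?thesis using S by (simp add: RR_mult SU11_mult ww_SU11 Rw Rn Rg l)
    next
      assume "g = gmat 1 t ** (ww ** ((- mat 1) ** gmat l b'))"
      thus ?thesis using S S2 by (simp add: RR_mult SU11_mult ww_SU11 Rw Rn R1)
    qed (simp_all add: Rg l R1)
  qed
  have "pp \<noteq> 0 \<and> Re (B pp pp) \<ge> 0 \<and> (\<forall>g\<in>SU11. \<rho> g pp \<in> cspan1 J pp)"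
    using pp_nz Re_B_pp Rall unfolding RR_def by auto
  moreover have "\<not> (\<exists>v. v \<noteq> 0 \<and> Re (B v v) \<ge> 0 \<and> (\<forall>g\<in>SU11. \<rho> g v \<in> cspan1 J v))"
    using irr unfolding irreducible_def by (rule conjunct1)
  ultimately show False by blast
qed

lemma hyperbolic: "\<exists>l0>0. \<exists>\<alpha>. \<rho> (gmat l0 0) \<eta>1 = csc J \<alpha> \<eta>1 \<and> cmod \<alpha> \<noteq> 1"
  using ELL by blast

lemma scale_mult:
  assumes g: "g \<in> SU11" and h: "h \<in> SU11" and x: "x \<noteq> 0"
    and a: "\<rho> g x = csc J a x" and c: "\<rho> h x = csc J c x" and d: "\<rho> (g ** h) x = csc J d x"
  shows "cmod d = cmod a * cmod c"
proof -
  obtain \<mu> where mu: "cmod \<mu> = 1" "\<And>v. \<rho> (g ** h) v = csc J \<mu> (\<rho> g (\<rho> h v))" using r_mult[OF g h] by blast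
  have "csc J d x = csc J (\<mu> * (c * a)) x" using d mu(2)[of x] c a g by (simp add: r_csc csc_mult)
  hence "d = \<mu> * (c * a)" using csc_cancel x by blast
  thus ?thesis using mu by (simp add: norm_mult)
qed

lemma Z_ex: "\<exists>z. z \<noteq> 0 \<and> \<rho> (gmat 1 b) \<eta>1 = csc J z \<eta>1"
proof -
  have "\<rho> (gmat 1 b) \<eta>1 \<in> cspan1 J \<eta>1" using fix1 by simp
  thus ?thesis using coeff1[OF gmat_SU11] by simp
qed

lemma unimod:
  assumes z: "\<rho> (gmat 1 b) \<eta>1 = csc J z \<eta>1" shows "cmod z = 1"
proof -
  have znz: "z \<noteq> 0" using r_nz[OF gmat_SU11 eta1_nz, of 1 b] z by auto
  obtain z2 where z2: "\<rho> (gmat 1 (b + b)) \<eta>1 = csc J z2 \<eta>1" using Z_ex by blast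
  obtain z4 where z4: "\<rho> (gmat 1 ((b + b) + (b + b))) \<eta>1 = csc J z4 \<eta>1" using Z_ex by blast
  have m2: "cmod z2 = cmod z * cmod z"
    using scale_mult[OF gmat_SU11 gmat_SU11 eta1_nz z z] z2 by (simp add: R_nn)
  have m4: "cmod z4 = cmod z2 * cmod z2"
    using scale_mult[OF gmat_SU11 gmat_SU11 eta1_nz z2 z2] z4 by (simp add: R_nn)
  have "\<rho> (gmat 2 0) \<eta>1 \<in> cspan1 J \<eta>1" using fix1 by simp
  then obtain a where a: "\<rho> (gmat 2 0) \<eta>1 = csc J a \<eta>1" by (auto simp: cspan1_iff)
  have "\<rho> (gmat (1/2) 0) \<eta>1 \<in> cspan1 J \<eta>1" using fix1 by simp
  then obtain c where c: "\<rho> (gmat (1/2) 0) \<eta>1 = csc J c \<eta>1" by (auto simp: cspan1_iff)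
  obtain e where e: "\<rho> (gmat 2 0 ** gmat 1 b) \<eta>1 = csc J e \<eta>1"
  proof -
    have S2: "gmat 2 0 \<in> SU11" "gmat 1 b \<in> SU11" by (simp_all add: gmat_SU11)
    obtain \<mu> where mu: "\<And>v. \<rho> (gmat 2 0 ** gmat 1 b) v = csc J \<mu> (\<rho> (gmat 2 0) (\<rho> (gmat 1 b) v))"
      using r_mult[OF S2] by blast
    show ?thesis using that[of "\<mu> * (z * a)"] mu[of \<eta>1] z a by (simp add: r_csc[OF gmat_SU11] csc_mult)
  qed
  have me: "cmod e = cmod a * cmod z"
    using scale_mult[OF gmat_SU11 gmat_SU11 eta1_nz a z e] by simp
  have "(gmat 2 0 ** gmat 1 b) ** gmat (1/2) 0 = gmat 1 ((b + b) + (b + b))"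
    using R_conj_n[of 2 b] by simp
  hence m4': "cmod z4 = cmod e * cmod c"
    using scale_mult[OF SU11_mult[OF gmat_SU11 gmat_SU11] gmat_SU11 eta1_nz e c] z4 by simp
  obtain \<nu> where nu: "cmod \<nu> = 1" "\<And>v. \<rho> (mat 1) v = csc J \<nu> v" using r_I by blast
  have "gmat 2 0 ** gmat (1/2) 0 = mat 1" using R_aa[of 2] by simp
  hence "cmod \<nu> = cmod a * cmod c"
    using scale_mult[OF gmat_SU11 gmat_SU11 eta1_nz a c] nu by simp
  hence ac: "cmod a * cmod c = 1" using nu by simp
  have "cmod z4 = cmod z" using m4' me ac by (simp add: mult_ac)
  hence "(cmod z)^4 = cmod z" using m4 m2 by (simp add: power4_eq_xxxx mult_ac)
  hence "(cmod z)^3 = 1" using znz by (simp add: power_Suc2 power4_eq_xxxx power3_eq_cube)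
  hence "norm (cmod z) = 1" using power_eq_1_iff[of "cmod z" 3] by simp
  thus ?thesis by simp
qed

lemma Kpos:
  assumes b: "b \<noteq> 0"
  shows "Re (Kfun J B \<rho> \<eta>1 \<eta>2 b) > 0"
proof -
  have S: "gmat 1 b \<in> SU11" by (simp add: gmat_SU11)
  obtain z where z: "z \<noteq> 0" "\<rho> (gmat 1 b) \<eta>1 = csc J z \<eta>1" using Z_ex by blast
  have cz: "cmod z = 1" by (rule unimod[OF z(2)])
  define \<mu> where "\<mu> = 1 / z"
  have cmu: "cmod \<mu> = 1" using cz by (simp add: \<mu>_def norm_divide)
  have mu_cnj: "\<mu> * cnj \<mu> = 1" using cmu by (simp add: cnj_mult_self)
  hence mu_cnj2: "cnj \<mu> * \<mu> = 1" by (simp add: mult.commute)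
  define T where "T v = csc J \<mu> (\<rho> (gmat 1 b) v)" for v
  have T1: "T \<eta>1 = \<eta>1" using z by (simp add: T_def csc_mult \<mu>_def)
  have TB: "B (T v) (T w) = B v w" for v w
    using S mu_cnj mu_cnj2 by (simp add: T_def Bsimps r_B mult.assoc[symmetric])
  define K where "K = B (T \<eta>2) \<eta>2"
  define c where "c = T \<eta>2 - csc J K \<eta>1 - \<eta>2"
  have Teq: "T \<eta>2 = csc J K \<eta>1 + \<eta>2 + c" by (simp add: c_def)
  have c1: "B c \<eta>1 = 0"
  proof -
    have "B (T \<eta>2) \<eta>1 = 1" using TB[of \<eta>2 \<eta>1] T1 e21 by simp
    thus ?thesis by (simp add: c_def Bsimps e11 e21)
  qed
  have c2: "B c \<eta>2 = 0" by (simp add: c_def Bsimps e12 e22 K_def)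
  have Kf: "Kfun J B \<rho> \<eta>1 \<eta>2 b = K"
    unfolding Kfun_def
  proof (rule the_equality)
    show "\<exists>\<mu> c. cmod \<mu> = 1 \<and> csc J \<mu> (\<rho> (gmat 1 b) \<eta>1) = \<eta>1 \<and> B c \<eta>1 = 0 \<and> B c \<eta>2 = 0 \<and>
          csc J \<mu> (\<rho> (gmat 1 b) \<eta>2) = csc J K \<eta>1 + \<eta>2 + c"
      using cmu T1 c1 c2 Teq unfolding T_def by blast
  next
    fix k assume "\<exists>\<mu>' c'. cmod \<mu>' = 1 \<and> csc J \<mu>' (\<rho> (gmat 1 b) \<eta>1) = \<eta>1 \<and> B c' \<eta>1 = 0 \<and> B c' \<eta>2 = 0 \<and>
          csc J \<mu>' (\<rho> (gmat 1 b) \<eta>2) = csc J k \<eta>1 + \<eta>2 + c'"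
    then obtain \<mu>' c' where h: "csc J \<mu>' (\<rho> (gmat 1 b) \<eta>1) = \<eta>1" "B c' \<eta>2 = 0"
          "csc J \<mu>' (\<rho> (gmat 1 b) \<eta>2) = csc J k \<eta>1 + \<eta>2 + c'" by blast
    have "csc J (\<mu>' * z) \<eta>1 = csc J (\<mu> * z) \<eta>1" using h(1) T1 z by (simp add: T_def csc_mult)
    hence "\<mu>' * z = \<mu> * z" using csc_cancel eta1_nz by blast
    hence mm: "\<mu>' = \<mu>" using z by simp
    have "B (csc J k \<eta>1 + \<eta>2 + c') \<eta>2 = k" by (simp add: Bsimps e12 e22 h(2))
    thus "k = K" using h(3) mm by (simp add: K_def T_def)
  qed
  have cnz: "c \<noteq> 0"
  proof
    assume c0: "c = 0"
    have "\<rho> (gmat 1 b) \<eta>2 = csc J z (T \<eta>2)" using z by (simp add: T_def csc_mult \<mu>_def)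
    also have "\<dots> = csc J (z * K) \<eta>1 + csc J z \<eta>2" using c0 Teq by (simp add: csc_add_vec csc_mult)
    finally have "\<rho> (gmat 1 b) \<eta>2 \<in> VV" using VV_I by simp
    moreover obtain l0 \<alpha> where "l0 > 0" "\<rho> (gmat l0 0) \<eta>1 = csc J \<alpha> \<eta>1" "cmod \<alpha> \<noteq> 1"
      using hyperbolic by blast
    ultimately show False using HYP b by blast
  qed
  have cneg: "Re (B c c) < 0"
  proof -
    have "B c pp = 0" by (simp add: pp_def Bsimps c1 c2)
    thus ?thesis using ND[OF Re_B_pp] cnz by fastforce
  qed
  have "0 = B (T \<eta>2) (T \<eta>2)" using TB[of \<eta>2 \<eta>2] e22 by simp
  also have "\<dots> = K + cnj K + B c c"
  proof -
    have cc1: "B \<eta>1 c = 0" using B_herm[of \<eta>1 c] c1 by simp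
    have cc2: "B \<eta>2 c = 0" using B_herm[of \<eta>2 c] c2 by simp
    show ?thesis unfolding Teq by (simp add: Bsimps e11 e12 e21 e22 c1 c2 cc1 cc2)
  qed
  finally have "Re K * 2 = - Re (B c c)" by (simp add: complex_eq_iff)
  thus ?thesis using Kf cneg by simp
qed

end

theorem main_result:
  fixes J :: "'v::{real_inner,complete_space} \<Rightarrow> 'v"
    and B :: "'v \<Rightarrow> 'v \<Rightarrow> complex"
    and \<rho>1 \<rho>2 :: "complex^2^2 \<Rightarrow> 'v \<Rightarrow> 'v"
    and \<eta>1 \<eta>2 :: 'v
    and b :: real
  assumes "hyp_setting J B"
    and "representation J B \<rho>1" and "irreducible J B \<rho>1"
    and "representation J B \<rho>2" and "irreducible J B \<rho>2"
    and "B \<eta>1 \<eta>1 = 0" and "B \<eta>2 \<eta>2 = 0" and "B \<eta>1 \<eta>2 = 1"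
    and "\<forall>l>0. \<forall>b'. \<rho>1 (gmat l b') \<eta>1 \<in> cspan1 J \<eta>1 \<and> \<rho>2 (gmat l b') \<eta>1 \<in> cspan1 J \<eta>1"
    and "\<forall>l>0. \<rho>1 (gmat l 0) \<eta>2 \<in> cspan1 J \<eta>2 \<and> \<rho>2 (gmat l 0) \<eta>2 \<in> cspan1 J \<eta>2"
    and "b \<noteq> 0"
  shows "Kfun J B \<rho>1 \<eta>1 \<eta>2 b + Kfun J B \<rho>2 \<eta>1 \<eta>2 b \<noteq> 0"
proof -
  interpret r1: rep J B \<rho>1 \<eta>1 \<eta>2
    using assms by unfold_locales blast+
  interpret r2: rep J B \<rho>2 \<eta>1 \<eta>2
    using assms by unfold_locales blast+
  have "Re (Kfun J B \<rho>1 \<eta>1 \<eta>2 b) > 0" by (rule r1.Kpos[OF assms(11)])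
  moreover have "Re (Kfun J B \<rho>2 \<eta>1 \<eta>2 b) > 0" by (rule r2.Kpos[OF assms(11)])
  ultimately have "Re (Kfun J B \<rho>1 \<eta>1 \<eta>2 b + Kfun J B \<rho>2 \<eta>1 \<eta>2 b) \<noteq> 0" by simp
  thus ?thesis by (metis zero_complex.sel(1))
qed


theorem mainTheorem18:
  fixes J :: "'v::{real_inner,complete_space} \<Rightarrow> 'v"
    and B :: "'v \<Rightarrow> 'v \<Rightarrow> complex"
    and \<rho>1 \<rho>2 :: "complex^2^2 \<Rightarrow> 'v \<Rightarrow> 'v"
    and \<eta>1 \<eta>2 :: 'v
    and b :: real
  assumes "hyp_setting J B"
    and "representation J B \<rho>1" and "irreducible J B \<rho>1"
    and "representation J B \<rho>2" and "irreducible J B \<rho>2"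
    and "ell B \<rho>1 = ell B \<rho>2"
    and "B \<eta>1 \<eta>1 = 0" and "B \<eta>2 \<eta>2 = 0" and "B \<eta>1 \<eta>2 = 1"
    and "\<forall>l>0. \<forall>b'. \<rho>1 (gmat l b') \<eta>1 \<in> cspan1 J \<eta>1 \<and> \<rho>2 (gmat l b') \<eta>1 \<in> cspan1 J \<eta>1"
    and "\<forall>l>0. \<rho>1 (gmat l 0) \<eta>2 \<in> cspan1 J \<eta>2 \<and> \<rho>2 (gmat l 0) \<eta>2 \<in> cspan1 J \<eta>2"
    and "b \<noteq> 0"
  shows "Kfun J B \<rho>1 \<eta>1 \<eta>2 b + Kfun J B \<rho>2 \<eta>1 \<eta>2 b \<noteq> 0"
  using main_result[of J B \<rho>1 \<rho>2 \<eta>1 \<eta>2 b] assms by blast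

end
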